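(* Let $(L_i)_{i\in I}$ be a family of lattices with zero, pairwise intersecting in $\{0\}$, let $L=\coprod^0_{i\in I}L_i$ with each $L_i$ identified with its canonical copy in $L$, adjoin a new top element $\infty$ to $L$ and put $\overline{L}_i=L_i\cup\{\infty\}$. Let $\alpha_i\colon L\to L_i$, $x\mapsto x_{(i)}$ (the largest element of $L_i$ below $x$), and $\beta_i\colon L\to\overline{L}_i$, $x\mapsto x^{(i)}$ (the least element of $\overline{L}_i$ above $x$ in $L\cup\{\infty\}$); these exist for all $x$. Then, for each $i\in I$, the canonical embedding $L_i\hookrightarrow L$ is both lower bounded and upper bounded; in particular it is a nonempty-complete lattice homomorphism. Furthermore, $\alpha_i$ is meet-complete and $\beta_i$ is nonempty-join-complete.
   Context: $\coprod^0$ denotes the coproduct in the category of lattices with zero and zero-preserving homomorphisms. A map $f\colon K\to M$ between lattices (not necessarily complete) is meet-complete if for all $a\in K$ and $X\subseteq K$, $a=\bigwedge X$ in $K$ implies $f(a)=\bigwedge f[X]$ in $M$; nonempty-meet-complete if this is required only for nonempty $X$; join-completeness and nonempty-join-completeness are defined dually; $f$ is nonempty-complete if it is both nonempty-meet-complete and nonempty-join-complete. A homomorphism $f\colon K\to M$ is lower bounded if for each $y\in M$ the set $\{x\in K: y\le f(x)\}$ is empty or has a least element; upper bounded is defined dually. *)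

theory Defs
  imports Main
begin

definition is_inf :: "('a \<Rightarrow> 'a \<Rightarrow> bool) \<Rightarrow> 'a set \<Rightarrow> 'a set \<Rightarrow> 'a \<Rightarrow> bool" where
  "is_inf le A X a \<longleftrightarrow> a \<in> A \<and> (\<forall>x\<in>X. le a x) \<and> (\<forall>b\<in>A. (\<forall>x\<in>X. le b x) \<longrightarrow> le b a)"

definition is_sup :: "('a \<Rightarrow> 'a \<Rightarrow> bool) \<Rightarrow> 'a set \<Rightarrow> 'a set \<Rightarrow> 'a \<Rightarrow> bool" where
  "is_sup le A X a \<longleftrightarrow> a \<in> A \<and> (\<forall>x\<in>X. le x a) \<and> (\<forall>b\<in>A. (\<forall>x\<in>X. le x b) \<longrightarrow> le a b)"

definition partial_order_on_set :: "('a \<Rightarrow> 'a \<Rightarrow> bool) \<Rightarrow> 'a set \<Rightarrow> bool" where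
  "partial_order_on_set le A \<longleftrightarrow>
     (\<forall>x\<in>A. le x x) \<and>
     (\<forall>x\<in>A. \<forall>y\<in>A. le x y \<and> le y x \<longrightarrow> x = y) \<and>
     (\<forall>x\<in>A. \<forall>y\<in>A. \<forall>w\<in>A. le x y \<and> le y w \<longrightarrow> le x w)"

definition is_lattice :: "('a \<Rightarrow> 'a \<Rightarrow> bool) \<Rightarrow> 'a set \<Rightarrow> bool" where
  "is_lattice le A \<longleftrightarrow> partial_order_on_set le A \<and>
     (\<forall>x\<in>A. \<forall>y\<in>A. (\<exists>s. is_sup le A {x, y} s) \<and> (\<exists>m. is_inf le A {x, y} m))"

definition is_lattice0 :: "('a \<Rightarrow> 'a \<Rightarrow> bool) \<Rightarrow> 'a set \<Rightarrow> 'a \<Rightarrow> bool" where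
  "is_lattice0 le A z \<longleftrightarrow> is_lattice le A \<and> z \<in> A \<and> (\<forall>x\<in>A. le z x)"

definition lattice_hom ::
  "('a \<Rightarrow> 'a \<Rightarrow> bool) \<Rightarrow> 'a set \<Rightarrow> ('b \<Rightarrow> 'b \<Rightarrow> bool) \<Rightarrow> 'b set \<Rightarrow> ('a \<Rightarrow> 'b) \<Rightarrow> bool" where
  "lattice_hom leK K leM M f \<longleftrightarrow> f ` K \<subseteq> M \<and>
     (\<forall>x\<in>K. \<forall>y\<in>K. \<forall>s. is_sup leK K {x, y} s \<longrightarrow> is_sup leM M {f x, f y} (f s)) \<and>
     (\<forall>x\<in>K. \<forall>y\<in>K. \<forall>m. is_inf leK K {x, y} m \<longrightarrow> is_inf leM M {f x, f y} (f m))"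

definition lattice_hom0 ::
  "('a \<Rightarrow> 'a \<Rightarrow> bool) \<Rightarrow> 'a set \<Rightarrow> 'a \<Rightarrow> ('b \<Rightarrow> 'b \<Rightarrow> bool) \<Rightarrow> 'b set \<Rightarrow> 'b \<Rightarrow> ('a \<Rightarrow> 'b) \<Rightarrow> bool" where
  "lattice_hom0 leK K zK leM M zM f \<longleftrightarrow> lattice_hom leK K leM M f \<and> f zK = zM"

definition sublattice0 :: "('a \<Rightarrow> 'a \<Rightarrow> bool) \<Rightarrow> 'a set \<Rightarrow> 'a \<Rightarrow> 'a set \<Rightarrow> bool" where
  "sublattice0 le A z B \<longleftrightarrow> B \<subseteq> A \<and> z \<in> B \<and>
     (\<forall>x\<in>B. \<forall>y\<in>B. \<forall>s. is_sup le A {x, y} s \<longrightarrow> s \<in> B) \<and>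
     (\<forall>x\<in>B. \<forall>y\<in>B. \<forall>m. is_inf le A {x, y} m \<longrightarrow> m \<in> B)"

text \<open>\<open>(L, le, z)\<close> is the coproduct, in the category of lattices with zero and
  zero-preserving homomorphisms, of the 0-sublattices \<open>Ls i\<close> (\<open>i \<in> I\<close>), the coproduct
  injections being the inclusion maps.  The test objects range over lattices with zero
  carried by subsets of \<open>('a + bool) list\<close>; this type is large enough to carry the
  true coproduct (which is generated by \<open>\<Union>i\<in>I. Ls i \<subseteq> 'a\<close>, hence a quotient of the
  lattice terms over that set), so this universal property determines \<open>L\<close> up to
  isomorphism.\<close>
definition is_coproduct0 ::
  "('a \<Rightarrow> 'a \<Rightarrow> bool) \<Rightarrow> 'a set \<Rightarrow> 'a \<Rightarrow> 'i set \<Rightarrow> ('i \<Rightarrow> 'a set) \<Rightarrow> bool" where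
  "is_coproduct0 le L z I Ls \<longleftrightarrow>
     is_lattice0 le L z \<and> (\<forall>i\<in>I. sublattice0 le L z (Ls i)) \<and>
     (\<forall>(M :: ('a + bool) list set) leM zM (fs :: 'i \<Rightarrow> 'a \<Rightarrow> ('a + bool) list).
        is_lattice0 leM M zM \<and> (\<forall>i\<in>I. lattice_hom0 le (Ls i) z leM M zM (fs i)) \<longrightarrow>
        (\<exists>f. lattice_hom0 le L z leM M zM f \<and> (\<forall>i\<in>I. \<forall>x\<in>Ls i. f x = fs i x) \<and>
             (\<forall>g. lattice_hom0 le L z leM M zM g \<and> (\<forall>i\<in>I. \<forall>x\<in>Ls i. g x = fs i x)
                  \<longrightarrow> (\<forall>x\<in>L. g x = f x))))"

definition meet_complete ::
  "('a \<Rightarrow> 'a \<Rightarrow> bool) \<Rightarrow> 'a set \<Rightarrow> ('b \<Rightarrow> 'b \<Rightarrow> bool) \<Rightarrow> 'b set \<Rightarrow> ('a \<Rightarrow> 'b) \<Rightarrow> bool" where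
  "meet_complete leK K leM M f \<longleftrightarrow>
     (\<forall>a\<in>K. \<forall>X. X \<subseteq> K \<and> is_inf leK K X a \<longrightarrow> is_inf leM M (f ` X) (f a))"

definition nonempty_meet_complete ::
  "('a \<Rightarrow> 'a \<Rightarrow> bool) \<Rightarrow> 'a set \<Rightarrow> ('b \<Rightarrow> 'b \<Rightarrow> bool) \<Rightarrow> 'b set \<Rightarrow> ('a \<Rightarrow> 'b) \<Rightarrow> bool" where
  "nonempty_meet_complete leK K leM M f \<longleftrightarrow>
     (\<forall>a\<in>K. \<forall>X. X \<subseteq> K \<and> X \<noteq> {} \<and> is_inf leK K X a \<longrightarrow> is_inf leM M (f ` X) (f a))"

definition join_complete ::
  "('a \<Rightarrow> 'a \<Rightarrow> bool) \<Rightarrow> 'a set \<Rightarrow> ('b \<Rightarrow> 'b \<Rightarrow> bool) \<Rightarrow> 'b set \<Rightarrow> ('a \<Rightarrow> 'b) \<Rightarrow> bool" where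
  "join_complete leK K leM M f \<longleftrightarrow>
     (\<forall>a\<in>K. \<forall>X. X \<subseteq> K \<and> is_sup leK K X a \<longrightarrow> is_sup leM M (f ` X) (f a))"

definition nonempty_join_complete ::
  "('a \<Rightarrow> 'a \<Rightarrow> bool) \<Rightarrow> 'a set \<Rightarrow> ('b \<Rightarrow> 'b \<Rightarrow> bool) \<Rightarrow> 'b set \<Rightarrow> ('a \<Rightarrow> 'b) \<Rightarrow> bool" where
  "nonempty_join_complete leK K leM M f \<longleftrightarrow>
     (\<forall>a\<in>K. \<forall>X. X \<subseteq> K \<and> X \<noteq> {} \<and> is_sup leK K X a \<longrightarrow> is_sup leM M (f ` X) (f a))"

definition nonempty_complete ::
  "('a \<Rightarrow> 'a \<Rightarrow> bool) \<Rightarrow> 'a set \<Rightarrow> ('b \<Rightarrow> 'b \<Rightarrow> bool) \<Rightarrow> 'b set \<Rightarrow> ('a \<Rightarrow> 'b) \<Rightarrow> bool" where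
  "nonempty_complete leK K leM M f \<longleftrightarrow>
     nonempty_meet_complete leK K leM M f \<and> nonempty_join_complete leK K leM M f"

definition lower_bounded ::
  "('a \<Rightarrow> 'a \<Rightarrow> bool) \<Rightarrow> 'a set \<Rightarrow> ('b \<Rightarrow> 'b \<Rightarrow> bool) \<Rightarrow> 'b set \<Rightarrow> ('a \<Rightarrow> 'b) \<Rightarrow> bool" where
  "lower_bounded leK K leM M f \<longleftrightarrow>
     (\<forall>y\<in>M. {x\<in>K. leM y (f x)} = {} \<or>
            (\<exists>m\<in>{x\<in>K. leM y (f x)}. \<forall>x\<in>{x\<in>K. leM y (f x)}. leK m x))"

definition upper_bounded ::
  "('a \<Rightarrow> 'a \<Rightarrow> bool) \<Rightarrow> 'a set \<Rightarrow> ('b \<Rightarrow> 'b \<Rightarrow> bool) \<Rightarrow> 'b set \<Rightarrow> ('a \<Rightarrow> 'b) \<Rightarrow> bool" where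
  "upper_bounded leK K leM M f \<longleftrightarrow>
     (\<forall>y\<in>M. {x\<in>K. leM (f x) y} = {} \<or>
            (\<exists>m\<in>{x\<in>K. leM (f x) y}. \<forall>x\<in>{x\<in>K. leM (f x) y}. leK x m))"

text \<open>Adjoining a new top element \<open>\<infinity>\<close>: elements of \<open>L \<union> {\<infinity>}\<close> are \<open>Some x\<close> and \<open>None = \<infinity>\<close>.\<close>
definition le_top :: "('a \<Rightarrow> 'a \<Rightarrow> bool) \<Rightarrow> 'a option \<Rightarrow> 'a option \<Rightarrow> bool" where
  "le_top le a b \<longleftrightarrow> (case b of None \<Rightarrow> True
                              | Some y \<Rightarrow> (case a of None \<Rightarrow> False | Some x \<Rightarrow> le x y))"

definition with_top :: "'a set \<Rightarrow> 'a option set" where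
  "with_top A = Some ` A \<union> {None}"

definition is_greatest_below :: "('a \<Rightarrow> 'a \<Rightarrow> bool) \<Rightarrow> 'a set \<Rightarrow> 'a \<Rightarrow> 'a \<Rightarrow> bool" where
  "is_greatest_below le A x y \<longleftrightarrow> y \<in> A \<and> le y x \<and> (\<forall>w\<in>A. le w x \<longrightarrow> le w y)"

definition lower_proj :: "('a \<Rightarrow> 'a \<Rightarrow> bool) \<Rightarrow> 'a set \<Rightarrow> 'a \<Rightarrow> 'a" where
  "lower_proj le A x = (THE y. is_greatest_below le A x y)"

definition is_least_above :: "('a \<Rightarrow> 'a \<Rightarrow> bool) \<Rightarrow> 'a set \<Rightarrow> 'a \<Rightarrow> 'a option \<Rightarrow> bool" where
  "is_least_above le A x y \<longleftrightarrow> y \<in> with_top A \<and> le_top le (Some x) y \<and>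
     (\<forall>w\<in>with_top A. le_top le (Some x) w \<longrightarrow> le_top le y w)"

definition upper_proj :: "('a \<Rightarrow> 'a \<Rightarrow> bool) \<Rightarrow> 'a set \<Rightarrow> 'a \<Rightarrow> 'a option" where
  "upper_proj le A x = (THE y. is_least_above le A x y)"

end

theory Submission
  imports Defs
begin

lemma le_top_simps[simp]:
  "le_top le a None = True" "le_top le None (Some y) = False" "le_top le (Some x) (Some y) = le x y"
  by (auto simp: le_top_def)

lemma with_top_simps[simp]:
  "None \<in> with_top A" "Some a \<in> with_top A \<longleftrightarrow> a \<in> A"
  by (auto simp: with_top_def)

lemma with_top_cases: "u \<in> with_top A \<Longrightarrow> u = None \<or> (\<exists>a\<in>A. u = Some a)"
  by (auto simp: with_top_def)

lemma lat0_po: "is_lattice0 le A z \<Longrightarrow> partial_order_on_set le A"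
  by (simp add: is_lattice0_def is_lattice_def)

lemma po_refl: "partial_order_on_set le A \<Longrightarrow> x \<in> A \<Longrightarrow> le x x"
  unfolding partial_order_on_set_def by blast
lemma po_antisym: "partial_order_on_set le A \<Longrightarrow> x \<in> A \<Longrightarrow> y \<in> A \<Longrightarrow> le x y \<Longrightarrow> le y x \<Longrightarrow> x = y"
  unfolding partial_order_on_set_def by blast
lemma po_trans: "partial_order_on_set le A \<Longrightarrow> x \<in> A \<Longrightarrow> y \<in> A \<Longrightarrow> w \<in> A \<Longrightarrow> le x y \<Longrightarrow> le y w \<Longrightarrow> le x w"
  unfolding partial_order_on_set_def by blast

lemma lat0_sup_ex: "is_lattice0 le A z \<Longrightarrow> x \<in> A \<Longrightarrow> y \<in> A \<Longrightarrow> \<exists>s. is_sup le A {x,y} s"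
  by (simp add: is_lattice0_def is_lattice_def)
lemma lat0_inf_ex: "is_lattice0 le A z \<Longrightarrow> x \<in> A \<Longrightarrow> y \<in> A \<Longrightarrow> \<exists>s. is_inf le A {x,y} s"
  by (simp add: is_lattice0_def is_lattice_def)
lemma lat0_z: "is_lattice0 le A z \<Longrightarrow> z \<in> A" "is_lattice0 le A z \<Longrightarrow> x \<in> A \<Longrightarrow> le z x"
  by (auto simp: is_lattice0_def)

lemma sup_unique: "partial_order_on_set le A \<Longrightarrow> is_sup le A X s \<Longrightarrow> is_sup le A X t \<Longrightarrow> s = t"
  unfolding is_sup_def by (meson po_antisym)
lemma inf_unique: "partial_order_on_set le A \<Longrightarrow> is_inf le A X s \<Longrightarrow> is_inf le A X t \<Longrightarrow> s = t"
  unfolding is_inf_def by (meson po_antisym)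

lemma sup_restrict: "is_sup le L X s \<Longrightarrow> s \<in> T \<Longrightarrow> T \<subseteq> L \<Longrightarrow> is_sup le T X s"
  unfolding is_sup_def by blast
lemma inf_restrict: "is_inf le L X s \<Longrightarrow> s \<in> T \<Longrightarrow> T \<subseteq> L \<Longrightarrow> is_inf le T X s"
  unfolding is_inf_def by blast

lemma po_subset: "partial_order_on_set le L \<Longrightarrow> T \<subseteq> L \<Longrightarrow> partial_order_on_set le T"
  unfolding partial_order_on_set_def by (meson subsetD)

lemma closed_sup_iff:
  assumes L0: "is_lattice0 le L z" and TL: "T \<subseteq> L" and x: "x \<in> T" and y: "y \<in> T"
    and cl: "\<forall>x\<in>T. \<forall>y\<in>T. \<forall>s. is_sup le L {x,y} s \<longrightarrow> s \<in> T"
  shows "is_sup le T {x,y} s \<longleftrightarrow> is_sup le L {x,y} s"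
proof
  assume h: "is_sup le T {x,y} s"
  obtain t where t: "is_sup le L {x,y} t" using lat0_sup_ex[OF L0] x y TL by blast
  then have tT: "t \<in> T" using cl x y by blast
  have t2: "is_sup le T {x,y} t" using sup_restrict[OF t tT TL] .
  have "partial_order_on_set le T" using po_subset[OF lat0_po[OF L0] TL] .
  then have "s = t" using sup_unique h t2 by metis
  then show "is_sup le L {x,y} s" using t by simp
next
  assume h: "is_sup le L {x,y} s"
  then have "s \<in> T" using cl x y by blast
  then show "is_sup le T {x,y} s" using sup_restrict[OF h _ TL] by blast
qed

lemma closed_inf_iff:
  assumes L0: "is_lattice0 le L z" and TL: "T \<subseteq> L" and x: "x \<in> T" and y: "y \<in> T"
    and cl: "\<forall>x\<in>T. \<forall>y\<in>T. \<forall>s. is_inf le L {x,y} s \<longrightarrow> s \<in> T"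
  shows "is_inf le T {x,y} s \<longleftrightarrow> is_inf le L {x,y} s"
proof
  assume h: "is_inf le T {x,y} s"
  obtain t where t: "is_inf le L {x,y} t" using lat0_inf_ex[OF L0] x y TL by blast
  then have tT: "t \<in> T" using cl x y by blast
  have t2: "is_inf le T {x,y} t" using inf_restrict[OF t tT TL] .
  have "partial_order_on_set le T" using po_subset[OF lat0_po[OF L0] TL] .
  then have "s = t" using inf_unique h t2 by metis
  then show "is_inf le L {x,y} s" using t by simp
next
  assume h: "is_inf le L {x,y} s"
  then have "s \<in> T" using cl x y by blast
  then show "is_inf le T {x,y} s" using inf_restrict[OF h _ TL] by blast
qed

lemma lat0_intro:
  assumes "partial_order_on_set le T" "z \<in> T" "\<And>x. x \<in> T \<Longrightarrow> le z x"
    "\<And>x y. x \<in> T \<Longrightarrow> y \<in> T \<Longrightarrow> \<exists>s. is_sup le T {x, y} s"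
    "\<And>x y. x \<in> T \<Longrightarrow> y \<in> T \<Longrightarrow> \<exists>s. is_inf le T {x, y} s"
  shows "is_lattice0 le T z"
  unfolding is_lattice0_def is_lattice_def using assms by blast

lemma closed_lattice0:
  assumes L0: "is_lattice0 le L z" and TL: "T \<subseteq> L" and zT: "z \<in> T"
    and cs: "\<forall>x\<in>T. \<forall>y\<in>T. \<forall>s. is_sup le L {x,y} s \<longrightarrow> s \<in> T"
    and ci: "\<forall>x\<in>T. \<forall>y\<in>T. \<forall>s. is_inf le L {x,y} s \<longrightarrow> s \<in> T"
  shows "is_lattice0 le T z"
proof (rule lat0_intro)
  show "partial_order_on_set le T" using po_subset[OF lat0_po[OF L0] TL] .
  show "z \<in> T" by fact
  show "le z x" if "x \<in> T" for x using lat0_z(2)[OF L0] that TL by blast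
  show "\<exists>s. is_sup le T {x, y} s" if xy: "x \<in> T" "y \<in> T" for x y
  proof -
    obtain s where "is_sup le L {x,y} s" using lat0_sup_ex[OF L0] xy TL by blast
    then show ?thesis using closed_sup_iff[OF L0 TL xy cs] by blast
  qed
  show "\<exists>s. is_inf le T {x, y} s" if xy: "x \<in> T" "y \<in> T" for x y
  proof -
    obtain s where "is_inf le L {x,y} s" using lat0_inf_ex[OF L0] xy TL by blast
    then show ?thesis using closed_inf_iff[OF L0 TL xy ci] by blast
  qed
qed

lemma sub0_closed:
  assumes "sublattice0 le L z B"
  shows "B \<subseteq> L" "z \<in> B" "\<forall>x\<in>B. \<forall>y\<in>B. \<forall>s. is_sup le L {x,y} s \<longrightarrow> s \<in> B"
    "\<forall>x\<in>B. \<forall>y\<in>B. \<forall>s. is_inf le L {x,y} s \<longrightarrow> s \<in> B"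
  using assms unfolding sublattice0_def by blast+

lemma sup_transfer:
  assumes inv: "\<forall>x\<in>A. d (e x) = x" and X: "X \<subseteq> A" and s: "s \<in> A"
  shows "is_sup (\<lambda>u v. leA (d u) (d v)) (e ` A) (e ` X) (e s) \<longleftrightarrow> is_sup leA A X s"
  using assms unfolding is_sup_def by (auto; metis subsetD)

lemma inf_transfer:
  assumes inv: "\<forall>x\<in>A. d (e x) = x" and X: "X \<subseteq> A" and s: "s \<in> A"
  shows "is_inf (\<lambda>u v. leA (d u) (d v)) (e ` A) (e ` X) (e s) \<longleftrightarrow> is_inf leA A X s"
  using assms unfolding is_inf_def by (auto; metis subsetD)

lemma lat0_transfer:
  assumes inv: "\<forall>x\<in>A. d (e x) = x" and lat: "is_lattice0 leA A zA"
  shows "is_lattice0 (\<lambda>u v. leA (d u) (d v)) (e ` A) (e zA)"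
proof (rule lat0_intro)
  have po: "partial_order_on_set leA A" using lat0_po[OF lat] .
  show "partial_order_on_set (\<lambda>u v. leA (d u) (d v)) (e ` A)"
    unfolding partial_order_on_set_def
  proof (intro conjI ballI impI)
    fix x assume "x \<in> e ` A" then obtain a where "a \<in> A" "x = e a" by blast
    then show "leA (d x) (d x)" using po_refl[OF po] inv by simp
  next
    fix x y assume "x \<in> e ` A" "y \<in> e ` A" "leA (d x) (d y) \<and> leA (d y) (d x)"
    then obtain a b where "a \<in> A" "x = e a" "b \<in> A" "y = e b" "leA a b" "leA b a" using inv by auto
    then show "x = y" using po_antisym[OF po] by metis
  next
    fix x y w assume "x \<in> e ` A" "y \<in> e ` A" "w \<in> e ` A" "leA (d x) (d y) \<and> leA (d y) (d w)"
    then obtain a b c where "a \<in> A" "x = e a" "b \<in> A" "y = e b" "c \<in> A" "w = e c" "leA a b" "leA b c" using inv by auto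
    then show "leA (d x) (d w)" using po_trans[OF po] inv by metis
  qed
  show "e zA \<in> e ` A" using lat0_z(1)[OF lat] by blast
  show "leA (d (e zA)) (d x)" if "x \<in> e ` A" for x
    using that lat0_z[OF lat] inv by auto
  show "\<exists>s. is_sup (\<lambda>u v. leA (d u) (d v)) (e ` A) {x, y} s" if xy: "x \<in> e ` A" "y \<in> e ` A" for x y
  proof -
    obtain a b where ab: "a \<in> A" "b \<in> A" "x = e a" "y = e b" using xy by blast
    obtain s where s: "is_sup leA A {a,b} s" using lat0_sup_ex[OF lat ab(1,2)] by blast
    then have "s \<in> A" unfolding is_sup_def by blast
    then have "is_sup (\<lambda>u v. leA (d u) (d v)) (e ` A) (e ` {a,b}) (e s)"
      using sup_transfer[where d=d and e=e and A=A and X="{a,b}" and s=s and leA=leA, OF inv] s ab by blast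
    then show ?thesis using ab by auto
  qed
  show "\<exists>s. is_inf (\<lambda>u v. leA (d u) (d v)) (e ` A) {x, y} s" if xy: "x \<in> e ` A" "y \<in> e ` A" for x y
  proof -
    obtain a b where ab: "a \<in> A" "b \<in> A" "x = e a" "y = e b" using xy by blast
    obtain s where s: "is_inf leA A {a,b} s" using lat0_inf_ex[OF lat ab(1,2)] by blast
    then have "s \<in> A" unfolding is_inf_def by blast
    then have "is_inf (\<lambda>u v. leA (d u) (d v)) (e ` A) (e ` {a,b}) (e s)"
      using inf_transfer[where d=d and e=e and A=A and X="{a,b}" and s=s and leA=leA, OF inv] s ab by blast
    then show ?thesis using ab by auto
  qed
qed

lemma hom0_transfer:
  assumes inv: "\<forall>x\<in>A. d (e x) = x" and im: "g ` K \<subseteq> A" and zK: "zK \<in> K" and zA: "zA \<in> A"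
  shows "lattice_hom0 leK K zK (\<lambda>u v. leA (d u) (d v)) (e ` A) (e zA) (e \<circ> g)
     \<longleftrightarrow> lattice_hom0 leK K zK leA A zA g"
proof -
  have eq: "\<And>x y s. x \<in> K \<Longrightarrow> y \<in> K \<Longrightarrow> s \<in> K \<Longrightarrow>
     is_sup (\<lambda>u v. leA (d u) (d v)) (e ` A) {(e \<circ> g) x, (e \<circ> g) y} ((e \<circ> g) s) \<longleftrightarrow> is_sup leA A {g x, g y} (g s)"
  proof -
    fix x y s assume "x \<in> K" "y \<in> K" "s \<in> K"
    then show "?thesis x y s" using sup_transfer[where d=d and e=e and A=A and X="{g x, g y}" and s="g s" and leA=leA, OF inv] im by auto
  qed
  have eq2: "\<And>x y s. x \<in> K \<Longrightarrow> y \<in> K \<Longrightarrow> s \<in> K \<Longrightarrow>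
     is_inf (\<lambda>u v. leA (d u) (d v)) (e ` A) {(e \<circ> g) x, (e \<circ> g) y} ((e \<circ> g) s) \<longleftrightarrow> is_inf leA A {g x, g y} (g s)"
  proof -
    fix x y s assume "x \<in> K" "y \<in> K" "s \<in> K"
    then show "?thesis x y s" using inf_transfer[where d=d and e=e and A=A and X="{g x, g y}" and s="g s" and leA=leA, OF inv] im by auto
  qed
  have zz: "(e \<circ> g) zK = e zA \<longleftrightarrow> g zK = zA" using inv im zK zA
    by (metis comp_apply image_subset_iff)
  have im2: "(e \<circ> g) ` K \<subseteq> e ` A" using im by auto
  show ?thesis unfolding lattice_hom0_def lattice_hom_def zz
    using eq eq2 im im2 by (auto simp: is_sup_def is_inf_def)
qed

lemma hom0_cong:
  assumes h: "lattice_hom0 leK K zK leM M zM f" and eq: "\<forall>x\<in>K. f x = g x" and zK: "zK \<in> K"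
  shows "lattice_hom0 leK K zK leM M zM g"
  unfolding lattice_hom0_def lattice_hom_def
proof (intro conjI ballI allI impI)
  show "g ` K \<subseteq> M" using h eq unfolding lattice_hom0_def lattice_hom_def by auto
  show "g zK = zM" using h eq zK unfolding lattice_hom0_def by auto
  fix x y s assume xy: "x \<in> K" "y \<in> K"
  { assume s: "is_sup leK K {x, y} s"
    then have "s \<in> K" unfolding is_sup_def by blast
    then show "is_sup leM M {g x, g y} (g s)" using h s xy eq unfolding lattice_hom0_def lattice_hom_def by metis }
  { assume s: "is_inf leK K {x, y} s"
    then have "s \<in> K" unfolding is_inf_def by blast
    then show "is_inf leM M {g x, g y} (g s)" using h s xy eq unfolding lattice_hom0_def lattice_hom_def by metis }
qed

lemma univ:
  fixes e :: "'b \<Rightarrow> ('a + bool) list" and fs :: "'i \<Rightarrow> 'a \<Rightarrow> 'b"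
  assumes cp: "is_coproduct0 le L z I Ls"
    and lat: "is_lattice0 leA A zA"
    and inv: "\<forall>x\<in>A. d (e x) = x"
    and homs: "\<forall>j\<in>I. lattice_hom0 le (Ls j) z leA A zA (fs j)"
  shows "\<exists>f. lattice_hom0 le L z leA A zA f \<and> (\<forall>j\<in>I. \<forall>x\<in>Ls j. f x = fs j x) \<and>
     (\<forall>g. lattice_hom0 le L z leA A zA g \<and> (\<forall>j\<in>I. \<forall>x\<in>Ls j. g x = fs j x) \<longrightarrow> (\<forall>x\<in>L. g x = f x))"
proof -
  let ?leM = "\<lambda>u v. leA (d u) (d v)"
  have L0: "is_lattice0 le L z" using cp unfolding is_coproduct0_def by blast
  have zL: "z \<in> L" using lat0_z[OF L0] by simp
  have zA: "zA \<in> A" using lat0_z[OF lat] by simp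
  have sub: "\<forall>j\<in>I. sublattice0 le L z (Ls j)" using cp unfolding is_coproduct0_def by blast
  have M0: "is_lattice0 ?leM (e ` A) (e zA)" using lat0_transfer[where d=d and e=e and A=A and leA=leA and zA=zA, OF inv lat] .
  have imj: "\<forall>j\<in>I. fs j ` Ls j \<subseteq> A" using homs unfolding lattice_hom0_def lattice_hom_def by blast
  have zj: "\<forall>j\<in>I. z \<in> Ls j" using sub unfolding sublattice0_def by blast
  have homs': "\<forall>j\<in>I. lattice_hom0 le (Ls j) z ?leM (e ` A) (e zA) (e \<circ> fs j)"
  proof
    fix j assume j: "j \<in> I"
    show "lattice_hom0 le (Ls j) z ?leM (e ` A) (e zA) (e \<circ> fs j)"
      using hom0_transfer[where d=d and e=e and A=A and leA=leA and zA=zA and g="fs j" and K="Ls j" and leK=le and zK=z, OF inv]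
        imj zj homs zA j by blast
  qed
  have U: "\<forall>(M :: ('a + bool) list set) leM zM (fs :: 'i \<Rightarrow> 'a \<Rightarrow> ('a + bool) list).
        is_lattice0 leM M zM \<and> (\<forall>i\<in>I. lattice_hom0 le (Ls i) z leM M zM (fs i)) \<longrightarrow>
        (\<exists>f. lattice_hom0 le L z leM M zM f \<and> (\<forall>i\<in>I. \<forall>x\<in>Ls i. f x = fs i x) \<and>
             (\<forall>g. lattice_hom0 le L z leM M zM g \<and> (\<forall>i\<in>I. \<forall>x\<in>Ls i. g x = fs i x)
                  \<longrightarrow> (\<forall>x\<in>L. g x = f x)))" using cp unfolding is_coproduct0_def by blast
  have U1: "is_lattice0 ?leM (e ` A) (e zA) \<and> (\<forall>i\<in>I. lattice_hom0 le (Ls i) z ?leM (e ` A) (e zA) ((\<lambda>j. e \<circ> fs j) i)) \<longrightarrow>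
        (\<exists>f. lattice_hom0 le L z ?leM (e ` A) (e zA) f \<and> (\<forall>i\<in>I. \<forall>x\<in>Ls i. f x = (\<lambda>j. e \<circ> fs j) i x) \<and>
             (\<forall>g. lattice_hom0 le L z ?leM (e ` A) (e zA) g \<and> (\<forall>i\<in>I. \<forall>x\<in>Ls i. g x = (\<lambda>j. e \<circ> fs j) i x)
                  \<longrightarrow> (\<forall>x\<in>L. g x = f x)))"
    by (rule spec[OF spec[OF spec[OF spec[OF U]]]])
  have "\<exists>F. lattice_hom0 le L z ?leM (e ` A) (e zA) F \<and> (\<forall>j\<in>I. \<forall>x\<in>Ls j. F x = (e \<circ> fs j) x) \<and>
    (\<forall>g. lattice_hom0 le L z ?leM (e ` A) (e zA) g \<and> (\<forall>i\<in>I. \<forall>x\<in>Ls i. g x = (e \<circ> fs i) x)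
                  \<longrightarrow> (\<forall>x\<in>L. g x = F x))"
    using mp[OF U1] M0 homs' by simp
  then obtain F where F: "lattice_hom0 le L z ?leM (e ` A) (e zA) F" "\<forall>j\<in>I. \<forall>x\<in>Ls j. F x = (e \<circ> fs j) x"
    "\<forall>g. lattice_hom0 le L z ?leM (e ` A) (e zA) g \<and> (\<forall>i\<in>I. \<forall>x\<in>Ls i. g x = (e \<circ> fs i) x)
                  \<longrightarrow> (\<forall>x\<in>L. g x = F x)" by blast
  define f where "f = d \<circ> F"
  have FL: "F ` L \<subseteq> e ` A" using F(1) unfolding lattice_hom0_def lattice_hom_def by blast
  have Fe: "\<forall>x\<in>L. F x = e (f x)"
  proof
    fix x assume "x \<in> L"
    then obtain a where "a \<in> A" "F x = e a" using FL by blast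
    then show "F x = e (f x)" unfolding f_def using inv by simp
  qed
  have fL: "f ` L \<subseteq> A"
  proof
    fix y assume "y \<in> f ` L"
    then obtain x where x: "x \<in> L" "y = f x" by blast
    then obtain a where "a \<in> A" "F x = e a" using FL by blast
    then show "y \<in> A" unfolding x f_def using inv by simp
  qed
  have "lattice_hom0 le L z ?leM (e ` A) (e zA) (e \<circ> f)"
    using hom0_cong[OF F(1) _ zL] Fe by simp
  then have fh: "lattice_hom0 le L z leA A zA f"
    using hom0_transfer[where d=d and e=e and A=A and leA=leA and zA=zA, OF inv fL zL zA] by simp
  have fa: "\<forall>j\<in>I. \<forall>x\<in>Ls j. f x = fs j x"
  proof (intro ballI)
    fix j x assume "j \<in> I" "x \<in> Ls j"
    moreover then have "fs j x \<in> A" using imj by blast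
    ultimately show "f x = fs j x" using F(2) inv unfolding f_def by simp
  qed
  have uq: "\<forall>g. lattice_hom0 le L z leA A zA g \<and> (\<forall>j\<in>I. \<forall>x\<in>Ls j. g x = fs j x) \<longrightarrow> (\<forall>x\<in>L. g x = f x)"
  proof (intro allI impI ballI)
    fix g x assume g: "lattice_hom0 le L z leA A zA g \<and> (\<forall>j\<in>I. \<forall>x\<in>Ls j. g x = fs j x)" and x: "x \<in> L"
    have gL: "g ` L \<subseteq> A" using g unfolding lattice_hom0_def lattice_hom_def by blast
    have "lattice_hom0 le L z ?leM (e ` A) (e zA) (e \<circ> g)"
      using hom0_transfer[where d=d and e=e and A=A and leA=leA and zA=zA, OF inv gL zL zA] g by simp
    moreover have "\<forall>i\<in>I. \<forall>x\<in>Ls i. (e \<circ> g) x = (e \<circ> fs i) x" using g by simp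
    ultimately have "(e \<circ> g) x = F x" using F(3) x by blast
    then have "d (e (g x)) = f x" unfolding f_def by simp
    moreover have "g x \<in> A" using gL x by blast
    ultimately show "g x = f x" using inv by simp
  qed
  show ?thesis using fh fa uq by blast
qed

definition enc1 :: "'a \<Rightarrow> ('a + bool) list" where "enc1 x = [Inl x]"
definition dec1 :: "('a + bool) list \<Rightarrow> 'a" where
  "dec1 u = (case u of [Inl a] \<Rightarrow> a | _ \<Rightarrow> undefined)"
lemma dec1_enc1[simp]: "dec1 (enc1 x) = x" by (simp add: enc1_def dec1_def)

lemma sub_id_hom:
  assumes L0: "is_lattice0 le L z" and BT: "B \<subseteq> T" and TL: "T \<subseteq> L" and zB: "z \<in> B"
    and csB: "\<forall>x\<in>B. \<forall>y\<in>B. \<forall>s. is_sup le L {x,y} s \<longrightarrow> s \<in> B"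
    and ciB: "\<forall>x\<in>B. \<forall>y\<in>B. \<forall>s. is_inf le L {x,y} s \<longrightarrow> s \<in> B"
    and csT: "\<forall>x\<in>T. \<forall>y\<in>T. \<forall>s. is_sup le L {x,y} s \<longrightarrow> s \<in> T"
    and ciT: "\<forall>x\<in>T. \<forall>y\<in>T. \<forall>s. is_inf le L {x,y} s \<longrightarrow> s \<in> T"
  shows "lattice_hom0 le B z le T z id"
  unfolding lattice_hom0_def lattice_hom_def
proof (intro conjI ballI allI impI)
  show "id ` B \<subseteq> T" using BT by simp
  show "id z = z" by simp
  have BL: "B \<subseteq> L" using BT TL by blast
  fix x y s assume xy: "x \<in> B" "y \<in> B"
  then have xyT: "x \<in> T" "y \<in> T" using BT by blast+
  { assume "is_sup le B {x, y} s"
    then have "is_sup le L {x, y} s" using closed_sup_iff[OF L0 BL xy csB] by blast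
    then show "is_sup le T {id x, id y} (id s)" using closed_sup_iff[OF L0 TL xyT csT] by simp }
  { assume "is_inf le B {x, y} s"
    then have "is_inf le L {x, y} s" using closed_inf_iff[OF L0 BL xy ciB] by blast
    then show "is_inf le T {id x, id y} (id s)" using closed_inf_iff[OF L0 TL xyT ciT] by simp }
qed

lemma hom_widen:
  assumes L0: "is_lattice0 le L z" and h: "lattice_hom0 leK K zK le T z f" and TL: "T \<subseteq> L"
    and csT: "\<forall>x\<in>T. \<forall>y\<in>T. \<forall>s. is_sup le L {x,y} s \<longrightarrow> s \<in> T"
    and ciT: "\<forall>x\<in>T. \<forall>y\<in>T. \<forall>s. is_inf le L {x,y} s \<longrightarrow> s \<in> T"
  shows "lattice_hom0 leK K zK le L z f"
  unfolding lattice_hom0_def lattice_hom_def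
proof (intro conjI ballI allI impI)
  have fT: "f ` K \<subseteq> T" using h unfolding lattice_hom0_def lattice_hom_def by blast
  then show "f ` K \<subseteq> L" using TL by blast
  show "f zK = z" using h unfolding lattice_hom0_def by blast
  fix x y s assume xy: "x \<in> K" "y \<in> K"
  then have fxy: "f x \<in> T" "f y \<in> T" using fT by blast+
  { assume "is_sup leK K {x, y} s"
    then have "is_sup le T {f x, f y} (f s)" using h xy unfolding lattice_hom0_def lattice_hom_def by blast
    then show "is_sup le L {f x, f y} (f s)" using closed_sup_iff[OF L0 TL fxy csT] by simp }
  { assume "is_inf leK K {x, y} s"
    then have "is_inf le T {f x, f y} (f s)" using h xy unfolding lattice_hom0_def lattice_hom_def by blast
    then show "is_inf le L {f x, f y} (f s)" using closed_inf_iff[OF L0 TL fxy ciT] by simp }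
qed

lemma coprod_induct:
  assumes cp: "is_coproduct0 le L z I Ls" and TL: "T \<subseteq> L" and zT: "z \<in> T"
    and gen: "\<forall>j\<in>I. Ls j \<subseteq> T"
    and csT: "\<forall>x\<in>T. \<forall>y\<in>T. \<forall>s. is_sup le L {x,y} s \<longrightarrow> s \<in> T"
    and ciT: "\<forall>x\<in>T. \<forall>y\<in>T. \<forall>s. is_inf le L {x,y} s \<longrightarrow> s \<in> T"
    and x: "x \<in> L"
  shows "x \<in> T"
proof -
  have L0: "is_lattice0 le L z" using cp unfolding is_coproduct0_def by blast
  have zL: "z \<in> L" using lat0_z[OF L0] by simp
  have sub: "\<forall>j\<in>I. sublattice0 le L z (Ls j)" using cp unfolding is_coproduct0_def by blast
  have T0: "is_lattice0 le T z" using closed_lattice0[OF L0 TL zT csT ciT] .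
  have csL: "\<forall>x\<in>L. \<forall>y\<in>L. \<forall>s. is_sup le L {x,y} s \<longrightarrow> s \<in> L" unfolding is_sup_def by blast
  have ciL: "\<forall>x\<in>L. \<forall>y\<in>L. \<forall>s. is_inf le L {x,y} s \<longrightarrow> s \<in> L" unfolding is_inf_def by blast
  have homsT: "\<forall>j\<in>I. lattice_hom0 le (Ls j) z le T z ((\<lambda>j. id) j)"
  proof
    fix j assume j: "j \<in> I"
    note sc = sub0_closed[OF bspec[OF sub j]]
    show "lattice_hom0 le (Ls j) z le T z ((\<lambda>j. id) j)"
      using sub_id_hom[OF L0 _ TL sc(2) sc(3) sc(4) csT ciT] gen j by simp
  qed
  have homsL: "\<forall>j\<in>I. lattice_hom0 le (Ls j) z le L z ((\<lambda>j. id) j)"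
  proof
    fix j assume j: "j \<in> I"
    note sc = sub0_closed[OF bspec[OF sub j]]
    show "lattice_hom0 le (Ls j) z le L z ((\<lambda>j. id) j)"
      using sub_id_hom[OF L0 sc(1) subset_refl sc(2) sc(3) sc(4) csL ciL] by simp
  qed
  have inv1: "\<forall>x\<in>T. dec1 (enc1 x) = x" "\<forall>x\<in>L. dec1 (enc1 x) = x" by simp_all
  from univ[where e=enc1 and d=dec1 and fs="\<lambda>j. id", OF cp T0 inv1(1) homsT]
  obtain f1 where f1: "lattice_hom0 le L z le T z f1" "\<forall>j\<in>I. \<forall>x\<in>Ls j. f1 x = id x"
    by blast
  from univ[where e=enc1 and d=dec1 and fs="\<lambda>j. id", OF cp L0 inv1(2) homsL]
  obtain F where F: "\<forall>g. lattice_hom0 le L z le L z g \<and> (\<forall>j\<in>I. \<forall>x\<in>Ls j. g x = id x) \<longrightarrow> (\<forall>x\<in>L. g x = F x)"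
    by blast
  have f1L: "lattice_hom0 le L z le L z f1" using hom_widen[OF L0 f1(1) TL csT ciT] .
  have idL: "lattice_hom0 le L z le L z id"
    using sub_id_hom[OF L0 subset_refl subset_refl zL csL ciL csL ciL] .
  have "f1 x = F x" using F[rule_format, OF conjI[OF f1L f1(2)] x] .
  moreover have "id x = F x" using F[rule_format, of id x] idL x by simp
  moreover have "f1 x \<in> T" using f1(1) x unfolding lattice_hom0_def lattice_hom_def by blast
  ultimately show ?thesis by simp
qed



lemma const_hom:
  assumes A0: "is_lattice0 leA A zA"
  shows "lattice_hom0 leB B zB leA A zA (\<lambda>_. zA)"
proof -
  have zA: "zA \<in> A" using lat0_z[OF A0] by simp
  have r: "leA zA zA" using po_refl[OF lat0_po[OF A0] zA] .
  have "is_sup leA A {zA, zA} zA" unfolding is_sup_def using zA r by blast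
  moreover have "is_inf leA A {zA, zA} zA" unfolding is_inf_def using zA r by blast
  ultimately show ?thesis unfolding lattice_hom0_def lattice_hom_def using zA by auto
qed

lemma inf_of_le:
  assumes po: "partial_order_on_set le L" and w: "w \<in> L" and x: "x \<in> L" and wx: "le w x"
  shows "is_inf le L {w, x} w"
  unfolding is_inf_def using po_refl[OF po w] w wx by blast

lemma sup_of_le:
  assumes po: "partial_order_on_set le L" and w: "w \<in> L" and x: "x \<in> L" and wx: "le x w"
  shows "is_sup le L {x, w} w"
  unfolding is_sup_def using po_refl[OF po w] w wx by blast

lemma hom_sup: "lattice_hom0 leK K zK leM M zM f \<Longrightarrow> x \<in> K \<Longrightarrow> y \<in> K \<Longrightarrow> is_sup leK K {x,y} s
  \<Longrightarrow> is_sup leM M {f x, f y} (f s)"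
  unfolding lattice_hom0_def lattice_hom_def by blast
lemma hom_inf: "lattice_hom0 leK K zK leM M zM f \<Longrightarrow> x \<in> K \<Longrightarrow> y \<in> K \<Longrightarrow> is_inf leK K {x,y} s
  \<Longrightarrow> is_inf leM M {f x, f y} (f s)"
  unfolding lattice_hom0_def lattice_hom_def by blast
lemma hom_im: "lattice_hom0 leK K zK leM M zM f \<Longrightarrow> x \<in> K \<Longrightarrow> f x \<in> M"
  unfolding lattice_hom0_def lattice_hom_def by blast
lemma hom_z: "lattice_hom0 leK K zK leM M zM f \<Longrightarrow> f zK = zM"
  unfolding lattice_hom0_def by blast

lemma retract:
  assumes cp: "is_coproduct0 le L z I Ls" and i: "i \<in> I"
  shows "\<exists>f. \<forall>x\<in>L. is_greatest_below le (Ls i) x (f x)"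
proof -
  have L0: "is_lattice0 le L z" using cp unfolding is_coproduct0_def by blast
  have po: "partial_order_on_set le L" using lat0_po[OF L0] .
  have sub: "\<forall>j\<in>I. sublattice0 le L z (Ls j)" using cp unfolding is_coproduct0_def by blast
  note sci = sub0_closed[OF bspec[OF sub i]]
  have Li0: "is_lattice0 le (Ls i) z" using closed_lattice0[OF L0 sci] .
  define fs where "fs = (\<lambda>j. if j = i then id else (\<lambda>_::'a. z))"
  have homs: "\<forall>j\<in>I. lattice_hom0 le (Ls j) z le (Ls i) z (fs j)"
  proof
    fix j assume j: "j \<in> I"
    show "lattice_hom0 le (Ls j) z le (Ls i) z (fs j)"
    proof (cases "j = i")
      case True
      then show ?thesis unfolding fs_def using sub_id_hom[OF L0 subset_refl sci(1) sci(2) sci(3) sci(4) sci(3) sci(4)] by simp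
    next
      case False
      then show ?thesis unfolding fs_def using const_hom[OF Li0] by simp
    qed
  qed
  have inv1: "\<forall>x\<in>Ls i. dec1 (enc1 x) = x" by simp
  from univ[where e=enc1 and d=dec1 and fs=fs, OF cp Li0 inv1 homs]
  obtain f where f: "lattice_hom0 le L z le (Ls i) z f" "\<forall>j\<in>I. \<forall>x\<in>Ls j. f x = fs j x" by blast
  have fi: "\<And>x. x \<in> Ls i \<Longrightarrow> f x = x" using f(2) i unfolding fs_def by simp
  have fj: "\<And>j x. j \<in> I \<Longrightarrow> j \<noteq> i \<Longrightarrow> x \<in> Ls j \<Longrightarrow> f x = z" using f(2) unfolding fs_def by simp
  have fLi: "\<And>x. x \<in> L \<Longrightarrow> f x \<in> Ls i" using hom_im[OF f(1)] .
  have fL: "\<And>x. x \<in> L \<Longrightarrow> f x \<in> L" using fLi sci(1) by blast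
  have fsup: "\<And>x y s. x \<in> L \<Longrightarrow> y \<in> L \<Longrightarrow> is_sup le L {x,y} s \<Longrightarrow> is_sup le L {f x, f y} (f s)"
    using hom_sup[OF f(1)] closed_sup_iff[OF L0 sci(1) _ _ sci(3)] fLi by blast
  have finf: "\<And>x y s. x \<in> L \<Longrightarrow> y \<in> L \<Longrightarrow> is_inf le L {x,y} s \<Longrightarrow> is_inf le L {f x, f y} (f s)"
    using hom_inf[OF f(1)] closed_inf_iff[OF L0 sci(1) _ _ sci(4)] fLi by blast
  define T where "T = {x\<in>L. le (f x) x}"
  have below: "x \<in> T" if x: "x \<in> L" for x
  proof (rule coprod_induct[OF cp _ _ _ _ _ x])
    show "T \<subseteq> L" unfolding T_def by blast
    show "z \<in> T" unfolding T_def using hom_z[OF f(1)] lat0_z[OF L0] by simp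
    show "\<forall>j\<in>I. Ls j \<subseteq> T"
    proof (intro ballI subsetI)
      fix j x assume j: "j \<in> I" and x: "x \<in> Ls j"
      have xL: "x \<in> L" using x sub0_closed(1)[OF bspec[OF sub j]] by blast
      show "x \<in> T"
      proof (cases "j = i")
        case True then show ?thesis unfolding T_def using fi x xL po_refl[OF po xL] by simp
      next
        case False then show ?thesis unfolding T_def using fj[OF j False x] xL lat0_z[OF L0] by simp
      qed
    qed
    show "\<forall>x\<in>T. \<forall>y\<in>T. \<forall>s. is_sup le L {x,y} s \<longrightarrow> s \<in> T"
    proof (intro ballI allI impI)
      fix x y s assume x: "x \<in> T" and y: "y \<in> T" and s: "is_sup le L {x,y} s"
      have xL: "x \<in> L" and yL: "y \<in> L" using x y unfolding T_def by auto
      have sL: "s \<in> L" using s unfolding is_sup_def by blast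
      have xs: "le x s" "le y s" using s unfolding is_sup_def by auto
      have fs2: "is_sup le L {f x, f y} (f s)" using fsup[OF xL yL s] .
      have "le (f x) s" using po_trans[OF po fL[OF xL] xL sL] x xs unfolding T_def by blast
      moreover have "le (f y) s" using po_trans[OF po fL[OF yL] yL sL] y xs unfolding T_def by blast
      ultimately have "le (f s) s" using fs2 sL unfolding is_sup_def by blast
      then show "s \<in> T" unfolding T_def using sL by blast
    qed
    show "\<forall>x\<in>T. \<forall>y\<in>T. \<forall>s. is_inf le L {x,y} s \<longrightarrow> s \<in> T"
    proof (intro ballI allI impI)
      fix x y s assume x: "x \<in> T" and y: "y \<in> T" and s: "is_inf le L {x,y} s"
      have xL: "x \<in> L" and yL: "y \<in> L" using x y unfolding T_def by auto
      have sL: "s \<in> L" using s unfolding is_inf_def by blast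
      have fs2: "is_inf le L {f x, f y} (f s)" using finf[OF xL yL s] .
      have fsx: "le (f s) (f x)" "le (f s) (f y)" using fs2 unfolding is_inf_def by auto
      have "le (f s) x" using po_trans[OF po fL[OF sL] fL[OF xL] xL] x fsx unfolding T_def by blast
      moreover have "le (f s) y" using po_trans[OF po fL[OF sL] fL[OF yL] yL] y fsx unfolding T_def by blast
      ultimately have "le (f s) s" using s fL[OF sL] unfolding is_inf_def by blast
      then show "s \<in> T" unfolding T_def using sL by blast
    qed
  qed
  have "is_greatest_below le (Ls i) x (f x)" if x: "x \<in> L" for x
    unfolding is_greatest_below_def
  proof (intro conjI ballI impI)
    show "f x \<in> Ls i" using fLi[OF x] .
    show "le (f x) x" using below[OF x] unfolding T_def by blast
    fix w assume w: "w \<in> Ls i" and wx: "le w x"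
    have wL: "w \<in> L" using w sci(1) by blast
    have "is_inf le L {f w, f x} (f w)" using finf[OF wL x inf_of_le[OF po wL x wx]] .
    then show "le w (f x)" using fi[OF w] unfolding is_inf_def by auto
  qed
  then show ?thesis by blast
qed

lemma with_top_mono: "A \<subseteq> B \<Longrightarrow> with_top A \<subseteq> with_top B"
  unfolding with_top_def by blast

lemma W2:
  assumes "is_sup le A {a,b} s"
  shows "is_sup (le_top le) (with_top A) {Some a, Some b} (Some s)"
  unfolding is_sup_def
proof (intro conjI ballI impI)
  show "Some s \<in> with_top A" using assms unfolding is_sup_def by simp
  fix x assume "x \<in> {Some a, Some b}"
  then show "le_top le x (Some s)" using assms unfolding is_sup_def by auto
next
  fix w assume w: "w \<in> with_top A" and ub: "\<forall>x\<in>{Some a, Some b}. le_top le x w"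
  show "le_top le (Some s) w"
  proof (cases w)
    case None then show ?thesis by simp
  next
    case (Some c)
    then have "c \<in> A" "le a c" "le b c" using w ub by auto
    then show ?thesis using assms Some unfolding is_sup_def by simp
  qed
qed

lemma W3:
  assumes "is_inf le A {a,b} s"
  shows "is_inf (le_top le) (with_top A) {Some a, Some b} (Some s)"
  unfolding is_inf_def
proof (intro conjI ballI impI)
  show "Some s \<in> with_top A" using assms unfolding is_inf_def by simp
  fix x assume "x \<in> {Some a, Some b}"
  then show "le_top le (Some s) x" using assms unfolding is_inf_def by auto
next
  fix w assume w: "w \<in> with_top A" and lb: "\<forall>x\<in>{Some a, Some b}. le_top le w x"
  show "le_top le w (Some s)"
  proof (cases w)
    case None then show ?thesis using lb by simp
  next
    case (Some c)
    then have "c \<in> A" "le c a" "le c b" using w lb by auto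
    then show ?thesis using assms Some unfolding is_inf_def by simp
  qed
qed

lemma W4:
  assumes "None \<in> X" "X \<subseteq> with_top A"
  shows "is_sup (le_top le) (with_top A) X None"
  unfolding is_sup_def
proof (intro conjI ballI impI)
  show "None \<in> with_top A" by simp
  fix x show "le_top le x None" by simp
next
  fix w assume "\<forall>x\<in>X. le_top le x w"
  then have "le_top le None w" using assms by blast
  then have "w = None" by (cases w) auto
  then show "le_top le None w" by simp
qed

lemma le_top_refl: "partial_order_on_set le A \<Longrightarrow> u \<in> with_top A \<Longrightarrow> le_top le u u"
  by (cases u) (auto intro: po_refl)

lemma W5:
  assumes po: "partial_order_on_set le A" and u: "u \<in> with_top A"
  shows "is_inf (le_top le) (with_top A) {None, u} u"
  unfolding is_inf_def
proof (intro conjI ballI impI)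
  show "u \<in> with_top A" by fact
  fix x assume "x \<in> {None, u}"
  then show "le_top le u x" using le_top_refl[OF po u] by auto
next
  fix w assume "\<forall>x\<in>{None, u}. le_top le w x"
  then show "le_top le w u" by blast
qed

lemma le_top_trans:
  assumes po: "partial_order_on_set le L" and u: "u \<in> with_top L" and v: "v \<in> with_top L"
    and w: "w \<in> with_top L" and uv: "le_top le u v" and vw: "le_top le v w"
  shows "le_top le u w"
proof (cases w)
  case None then show ?thesis by simp
next
  case (Some c)
  then obtain b where b: "v = Some b" using vw by (cases v) auto
  then obtain a where a: "u = Some a" using uv by (cases u) auto
  show ?thesis using po_trans[OF po, of a b c] u v w uv vw a b Some by simp
qed

lemma le_top_antisym:
  assumes po: "partial_order_on_set le L" and u: "u \<in> with_top L" and v: "v \<in> with_top L"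
    and uv: "le_top le u v" and vu: "le_top le v u"
  shows "u = v"
proof (cases u)
  case None then show ?thesis using uv by (cases v) auto
next
  case (Some a)
  then obtain b where b: "v = Some b" using vu by (cases v) auto
  show ?thesis using po_antisym[OF po, of a b] u v uv vu Some b by simp
qed

lemma po_top: "partial_order_on_set le A \<Longrightarrow> partial_order_on_set (le_top le) (with_top A)"
proof -
  assume po: "partial_order_on_set le A"
  show ?thesis unfolding partial_order_on_set_def[of "le_top le"]
  proof (intro conjI ballI impI)
    fix x assume "x \<in> with_top A" then show "le_top le x x" using le_top_refl[OF po] by blast
  next
    fix x y assume "x \<in> with_top A" "y \<in> with_top A" "le_top le x y \<and> le_top le y x"
    then show "x = y" using le_top_antisym[OF po] by blast
  next
    fix x y w assume "x \<in> with_top A" "y \<in> with_top A" "w \<in> with_top A" "le_top le x y \<and> le_top le y w"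
    then show "le_top le x w" using le_top_trans[OF po] by blast
  qed
qed

lemma lat0_top:
  assumes A0: "is_lattice0 le A z"
  shows "is_lattice0 (le_top le) (with_top A) (Some z)"
proof (rule lat0_intro)
  have po: "partial_order_on_set le A" using lat0_po[OF A0] .
  show "partial_order_on_set (le_top le) (with_top A)" using po_top[OF po] .
  show "Some z \<in> with_top A" using lat0_z[OF A0] by simp
  show "le_top le (Some z) x" if "x \<in> with_top A" for x
    using that lat0_z[OF A0] by (cases x) auto
  show "\<exists>s. is_sup (le_top le) (with_top A) {x, y} s" if xy: "x \<in> with_top A" "y \<in> with_top A" for x y
  proof (cases "x = None \<or> y = None")
    case True then show ?thesis using W4[of "{x,y}" A le] xy by blast
  next
    case False
    then obtain a b where ab: "x = Some a" "y = Some b" by auto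
    then have "a \<in> A" "b \<in> A" using xy by auto
    then obtain s where "is_sup le A {a,b} s" using lat0_sup_ex[OF A0] by blast
    then have "is_sup (le_top le) (with_top A) {Some a, Some b} (Some s)" by (rule W2)
    then show ?thesis using ab by blast
  qed
  show "\<exists>s. is_inf (le_top le) (with_top A) {x, y} s" if xy: "x \<in> with_top A" "y \<in> with_top A" for x y
  proof (cases "x = None \<or> y = None")
    case True
    then show ?thesis
    proof
      assume "x = None" then show ?thesis using W5[OF po xy(2)] by blast
    next
      assume "y = None" then show ?thesis using W5[OF po xy(1)] by (metis insert_commute)
    qed
  next
    case False
    then obtain a b where ab: "x = Some a" "y = Some b" by auto
    then have "a \<in> A" "b \<in> A" using xy by auto
    then obtain s where "is_inf le A {a,b} s" using lat0_inf_ex[OF A0] by blast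
    then have "is_inf (le_top le) (with_top A) {Some a, Some b} (Some s)" by (rule W3)
    then show ?thesis using ab by blast
  qed
qed

definition smash_le :: "('b \<Rightarrow> 'b \<Rightarrow> bool) \<Rightarrow> ('c \<Rightarrow> 'c \<Rightarrow> bool) \<Rightarrow> 'b \<times> 'c \<Rightarrow> 'b \<times> 'c \<Rightarrow> bool" where
  "smash_le le1 le2 p q \<longleftrightarrow> le1 (fst p) (fst q) \<and> le2 (snd p) (snd q)"

definition smash :: "'b set \<Rightarrow> 'b \<Rightarrow> 'c set \<Rightarrow> 'c \<Rightarrow> ('b \<times> 'c) set" where
  "smash A1 z1 A2 z2 = insert (z1, z2) {(p, q). p \<in> A1 \<and> q \<in> A2 \<and> p \<noteq> z1 \<and> q \<noteq> z2}"

lemma smash_le_simp[simp]: "smash_le le1 le2 (a, b) (c, d) \<longleftrightarrow> le1 a c \<and> le2 b d"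
  by (simp add: smash_le_def)

lemma smash_mem:
  assumes "(p, q) \<in> smash A1 z1 A2 z2" "z1 \<in> A1" "z2 \<in> A2"
  shows "p \<in> A1" "q \<in> A2" "p = z1 \<longleftrightarrow> q = z2"
  using assms unfolding smash_def by auto

lemma smash_memI: "p \<in> A1 \<Longrightarrow> q \<in> A2 \<Longrightarrow> p \<noteq> z1 \<Longrightarrow> q \<noteq> z2 \<Longrightarrow> (p, q) \<in> smash A1 z1 A2 z2"
  "(z1, z2) \<in> smash A1 z1 A2 z2"
  unfolding smash_def by auto

lemma le_z_eq: "is_lattice0 le A z \<Longrightarrow> a \<in> A \<Longrightarrow> le a z \<Longrightarrow> a = z"
  using po_antisym[OF lat0_po] lat0_z by metis

lemma S_sup:
  assumes A1: "is_lattice0 le1 A1 z1" and A2: "is_lattice0 le2 A2 z2"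
    and m1: "(p1, q1) \<in> smash A1 z1 A2 z2" and m2: "(p2, q2) \<in> smash A1 z1 A2 z2"
    and s1: "is_sup le1 A1 {p1, p2} s1" and s2: "is_sup le2 A2 {q1, q2} s2"
  shows "is_sup (smash_le le1 le2) (smash A1 z1 A2 z2) {(p1, q1), (p2, q2)} (s1, s2)"
proof -
  have z1: "z1 \<in> A1" and z2: "z2 \<in> A2" using lat0_z(1)[OF A1] lat0_z(1)[OF A2] by simp_all
  note mm1 = smash_mem[OF m1 z1 z2] and mm2 = smash_mem[OF m2 z1 z2]
  have s1A: "s1 \<in> A1" and s2A: "s2 \<in> A2" using s1 s2 unfolding is_sup_def by blast+
  have ps: "le1 p1 s1" "le1 p2 s1" "le2 q1 s2" "le2 q2 s2" using s1 s2 unfolding is_sup_def by blast+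
  have mem: "(s1, s2) \<in> smash A1 z1 A2 z2"
  proof (cases "s1 = z1 \<or> s2 = z2")
    case True
    have all: "p1 = z1 \<and> p2 = z1 \<and> q1 = z2 \<and> q2 = z2"
    proof (cases "s1 = z1")
      case True
      then have "p1 = z1" "p2 = z1" using le_z_eq[OF A1 mm1(1)] le_z_eq[OF A1 mm2(1)] ps by simp_all
      then show ?thesis using mm1(3) mm2(3) by simp
    next
      case False
      then have "s2 = z2" using \<open>s1 = z1 \<or> s2 = z2\<close> by simp
      then have "q1 = z2" "q2 = z2" using le_z_eq[OF A2 mm1(2)] le_z_eq[OF A2 mm2(2)] ps by simp_all
      then show ?thesis using mm1(3) mm2(3) by simp
    qed
    have r1: "le1 z1 z1" and r2: "le2 z2 z2" using po_refl[OF lat0_po[OF A1] z1] po_refl[OF lat0_po[OF A2] z2] .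
    have "le1 s1 z1" using s1 z1 r1 all unfolding is_sup_def by auto
    then have "s1 = z1" using le_z_eq[OF A1 s1A] by blast
    moreover have "le2 s2 z2" using s2 z2 r2 all unfolding is_sup_def by auto
    then have "s2 = z2" using le_z_eq[OF A2 s2A] by blast
    ultimately show ?thesis using smash_memI(2) by simp
  next
    case False then show ?thesis using smash_memI(1)[OF s1A s2A] by simp
  qed
  show ?thesis unfolding is_sup_def
  proof (intro conjI ballI impI)
    show "(s1, s2) \<in> smash A1 z1 A2 z2" by fact
    fix x assume "x \<in> {(p1, q1), (p2, q2)}"
    then show "smash_le le1 le2 x (s1, s2)" using ps by auto
  next
    fix b assume b: "b \<in> smash A1 z1 A2 z2" and ub: "\<forall>x\<in>{(p1, q1), (p2, q2)}. smash_le le1 le2 x b"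
    obtain b1 b2 where bb: "b = (b1, b2)" by (cases b)
    note bm = smash_mem[OF b[unfolded bb] z1 z2]
    have "le1 p1 b1" "le1 p2 b1" "le2 q1 b2" "le2 q2 b2" using ub bb by auto
    then have "le1 s1 b1" "le2 s2 b2" using s1 s2 bm unfolding is_sup_def by blast+
    then show "smash_le le1 le2 (s1, s2) b" using bb by simp
  qed
qed

lemma S_inf:
  assumes A1: "is_lattice0 le1 A1 z1" and A2: "is_lattice0 le2 A2 z2"
    and m1: "(p1, q1) \<in> smash A1 z1 A2 z2" and m2: "(p2, q2) \<in> smash A1 z1 A2 z2"
    and s1: "is_inf le1 A1 {p1, p2} s1" and s2: "is_inf le2 A2 {q1, q2} s2"
  shows "is_inf (smash_le le1 le2) (smash A1 z1 A2 z2) {(p1, q1), (p2, q2)}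
     (if s1 \<noteq> z1 \<and> s2 \<noteq> z2 then (s1, s2) else (z1, z2))"
proof -
  have z1: "z1 \<in> A1" and z2: "z2 \<in> A2" using lat0_z(1)[OF A1] lat0_z(1)[OF A2] by simp_all
  note mm1 = smash_mem[OF m1 z1 z2] and mm2 = smash_mem[OF m2 z1 z2]
  have s1A: "s1 \<in> A1" and s2A: "s2 \<in> A2" using s1 s2 unfolding is_inf_def by blast+
  have ps: "le1 s1 p1" "le1 s1 p2" "le2 s2 q1" "le2 s2 q2" using s1 s2 unfolding is_inf_def by blast+
  show ?thesis
  proof (cases "s1 \<noteq> z1 \<and> s2 \<noteq> z2")
    case True
    have eq: "(if s1 \<noteq> z1 \<and> s2 \<noteq> z2 then (s1, s2) else (z1, z2)) = (s1, s2)" using True by simp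
    show ?thesis unfolding eq is_inf_def
    proof (intro conjI ballI impI)
      show "(s1, s2) \<in> smash A1 z1 A2 z2" using smash_memI(1)[OF s1A s2A] True by simp
      fix x assume "x \<in> {(p1, q1), (p2, q2)}"
      then show "smash_le le1 le2 (s1, s2) x" using ps by auto
    next
      fix b assume b: "b \<in> smash A1 z1 A2 z2" and lb: "\<forall>x\<in>{(p1, q1), (p2, q2)}. smash_le le1 le2 b x"
      obtain b1 b2 where bb: "b = (b1, b2)" by (cases b)
      note bm = smash_mem[OF b[unfolded bb] z1 z2]
      have "le1 b1 p1" "le1 b1 p2" "le2 b2 q1" "le2 b2 q2" using lb bb by auto
      then have "le1 b1 s1" "le2 b2 s2" using s1 s2 bm unfolding is_inf_def by blast+
      then show "smash_le le1 le2 b (s1, s2)" using bb by simp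
    qed
  next
    case False
    have eq: "(if s1 \<noteq> z1 \<and> s2 \<noteq> z2 then (s1, s2) else (z1, z2)) = (z1, z2)" using False by simp
    show ?thesis unfolding eq is_inf_def
    proof (intro conjI ballI impI)
      show "(z1, z2) \<in> smash A1 z1 A2 z2" using smash_memI(2) .
      fix x assume "x \<in> {(p1, q1), (p2, q2)}"
      then show "smash_le le1 le2 (z1, z2) x" using lat0_z(2)[OF A1] lat0_z(2)[OF A2] mm1 mm2 by auto
    next
      fix b assume b: "b \<in> smash A1 z1 A2 z2" and lb: "\<forall>x\<in>{(p1, q1), (p2, q2)}. smash_le le1 le2 b x"
      obtain b1 b2 where bb: "b = (b1, b2)" by (cases b)
      note bm = smash_mem[OF b[unfolded bb] z1 z2]
      have "le1 b1 p1" "le1 b1 p2" "le2 b2 q1" "le2 b2 q2" using lb bb by auto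
      then have "le1 b1 s1" "le2 b2 s2" using s1 s2 bm unfolding is_inf_def by blast+
      then have "b1 = z1 \<or> b2 = z2" using False le_z_eq[OF A1] le_z_eq[OF A2] bm by metis
      then have "b1 = z1" "b2 = z2" using bm by blast+
      then show "smash_le le1 le2 b (z1, z2)" using bb po_refl[OF lat0_po[OF A1] z1] po_refl[OF lat0_po[OF A2] z2] by simp
    qed
  qed
qed

lemma smash_lat0:
  assumes A1: "is_lattice0 le1 A1 z1" and A2: "is_lattice0 le2 A2 z2"
  shows "is_lattice0 (smash_le le1 le2) (smash A1 z1 A2 z2) (z1, z2)"
proof (rule lat0_intro)
  have z1: "z1 \<in> A1" and z2: "z2 \<in> A2" using lat0_z(1)[OF A1] lat0_z(1)[OF A2] by simp_all
  have po1: "partial_order_on_set le1 A1" and po2: "partial_order_on_set le2 A2" using lat0_po[OF A1] lat0_po[OF A2] by simp_all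
  show "partial_order_on_set (smash_le le1 le2) (smash A1 z1 A2 z2)"
    unfolding partial_order_on_set_def
  proof (intro conjI ballI impI)
    fix x assume "x \<in> smash A1 z1 A2 z2"
    then show "smash_le le1 le2 x x" using smash_mem[OF _ z1 z2] po_refl[OF po1] po_refl[OF po2]
      by (cases x) auto
  next
    fix x y assume x: "x \<in> smash A1 z1 A2 z2" and y: "y \<in> smash A1 z1 A2 z2"
      and le: "smash_le le1 le2 x y \<and> smash_le le1 le2 y x"
    obtain a b c d where ab: "x = (a, b)" "y = (c, d)" by (cases x, cases y)
    note xm = smash_mem[OF x[unfolded ab(1)] z1 z2] and ym = smash_mem[OF y[unfolded ab(2)] z1 z2]
    show "x = y" using po_antisym[OF po1, of a c] po_antisym[OF po2, of b d] xm ym le ab by simp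
  next
    fix x y w assume x: "x \<in> smash A1 z1 A2 z2" and y: "y \<in> smash A1 z1 A2 z2" and w: "w \<in> smash A1 z1 A2 z2"
      and le: "smash_le le1 le2 x y \<and> smash_le le1 le2 y w"
    obtain a b c d e f where ab: "x = (a, b)" "y = (c, d)" "w = (e, f)" by (cases x, cases y, cases w)
    note xm = smash_mem[OF x[unfolded ab(1)] z1 z2] and ym = smash_mem[OF y[unfolded ab(2)] z1 z2]
      and wm = smash_mem[OF w[unfolded ab(3)] z1 z2]
    show "smash_le le1 le2 x w" using po_trans[OF po1, of a c e] po_trans[OF po2, of b d f] xm ym wm le ab by simp
  qed
  show "(z1, z2) \<in> smash A1 z1 A2 z2" by (rule smash_memI(2))
  show "smash_le le1 le2 (z1, z2) x" if "x \<in> smash A1 z1 A2 z2" for x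
    using that smash_mem[OF _ z1 z2] lat0_z(2)[OF A1] lat0_z(2)[OF A2] by (cases x) auto
  show "\<exists>s. is_sup (smash_le le1 le2) (smash A1 z1 A2 z2) {x, y} s"
    if x: "x \<in> smash A1 z1 A2 z2" and y: "y \<in> smash A1 z1 A2 z2" for x y
  proof -
    obtain a b c d where ab: "x = (a, b)" "y = (c, d)" by (cases x, cases y)
    note xm = smash_mem[OF x[unfolded ab(1)] z1 z2] and ym = smash_mem[OF y[unfolded ab(2)] z1 z2]
    obtain s1 where s1: "is_sup le1 A1 {a, c} s1" using lat0_sup_ex[OF A1] xm ym by blast
    obtain s2 where s2: "is_sup le2 A2 {b, d} s2" using lat0_sup_ex[OF A2] xm ym by blast
    show ?thesis using S_sup[OF A1 A2 x[unfolded ab(1)] y[unfolded ab(2)] s1 s2] ab by blast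
  qed
  show "\<exists>s. is_inf (smash_le le1 le2) (smash A1 z1 A2 z2) {x, y} s"
    if x: "x \<in> smash A1 z1 A2 z2" and y: "y \<in> smash A1 z1 A2 z2" for x y
  proof -
    obtain a b c d where ab: "x = (a, b)" "y = (c, d)" by (cases x, cases y)
    note xm = smash_mem[OF x[unfolded ab(1)] z1 z2] and ym = smash_mem[OF y[unfolded ab(2)] z1 z2]
    obtain s1 where s1: "is_inf le1 A1 {a, c} s1" using lat0_inf_ex[OF A1] xm ym by blast
    obtain s2 where s2: "is_inf le2 A2 {b, d} s2" using lat0_inf_ex[OF A2] xm ym by blast
    show ?thesis using S_inf[OF A1 A2 x[unfolded ab(1)] y[unfolded ab(2)] s1 s2] ab by blast
  qed
qed

lemma smash_hom:
  assumes B0: "is_lattice0 le B z" and A1: "is_lattice0 le1 A1 z1" and A2: "is_lattice0 le2 A2 z2"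
    and g1A: "\<forall>a\<in>B. g1 a \<in> A1" and g2A: "\<forall>a\<in>B. g2 a \<in> A2"
    and g1z: "\<forall>a\<in>B. g1 a = z1 \<longleftrightarrow> a = z" and g2z: "\<forall>a\<in>B. g2 a = z2 \<longleftrightarrow> a = z"
    and s1: "\<forall>a\<in>B. \<forall>b\<in>B. \<forall>s. is_sup le B {a,b} s \<longrightarrow> is_sup le1 A1 {g1 a, g1 b} (g1 s)"
    and s2: "\<forall>a\<in>B. \<forall>b\<in>B. \<forall>s. is_sup le B {a,b} s \<longrightarrow> is_sup le2 A2 {g2 a, g2 b} (g2 s)"
    and i1: "\<forall>a\<in>B. \<forall>b\<in>B. \<forall>s. is_inf le B {a,b} s \<longrightarrow> s \<noteq> z \<longrightarrow> is_inf le1 A1 {g1 a, g1 b} (g1 s)"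
    and i2: "\<forall>a\<in>B. \<forall>b\<in>B. \<forall>s. is_inf le B {a,b} s \<longrightarrow> is_inf le2 A2 {g2 a, g2 b} (g2 s)"
  shows "lattice_hom0 le B z (smash_le le1 le2) (smash A1 z1 A2 z2) (z1, z2) (\<lambda>a. (g1 a, g2 a))"
proof -
  have zB: "z \<in> B" using lat0_z(1)[OF B0] .
  have mem: "(g1 a, g2 a) \<in> smash A1 z1 A2 z2" if a: "a \<in> B" for a
  proof (cases "a = z")
    case True
    then have "g1 a = z1" "g2 a = z2" using g1z g2z a by auto
    then show ?thesis using smash_memI(2)[of z1 z2 A1 A2] by simp
  next
    case False then show ?thesis using g1z g2z g1A g2A a smash_memI(1)[of "g1 a" A1 "g2 a" A2 z1 z2] by simp
  qed
  show ?thesis unfolding lattice_hom0_def lattice_hom_def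
  proof (intro conjI ballI allI impI)
    show "(\<lambda>a. (g1 a, g2 a)) ` B \<subseteq> smash A1 z1 A2 z2" using mem by blast
    show "(g1 z, g2 z) = (z1, z2)" using g1z g2z zB by simp
    fix x y s assume x: "x \<in> B" and y: "y \<in> B"
    { assume s: "is_sup le B {x, y} s"
      show "is_sup (smash_le le1 le2) (smash A1 z1 A2 z2) {(g1 x, g2 x), (g1 y, g2 y)} (g1 s, g2 s)"
        using S_sup[OF A1 A2 mem[OF x] mem[OF y]] s1 s2 x y s by blast }
    { assume s: "is_inf le B {x, y} s"
      have sB: "s \<in> B" using s unfolding is_inf_def by blast
      have is2: "is_inf le2 A2 {g2 x, g2 y} (g2 s)" using i2 x y s by blast
      show "is_inf (smash_le le1 le2) (smash A1 z1 A2 z2) {(g1 x, g2 x), (g1 y, g2 y)} (g1 s, g2 s)"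
      proof (cases "s = z")
        case False
        have is1: "is_inf le1 A1 {g1 x, g1 y} (g1 s)" using i1 x y s False by blast
        have "g1 s \<noteq> z1" "g2 s \<noteq> z2" using g1z g2z sB False by auto
        then show ?thesis using S_inf[OF A1 A2 mem[OF x] mem[OF y] is1 is2] by simp
      next
        case True
        obtain n1 where is1: "is_inf le1 A1 {g1 x, g1 y} n1" using lat0_inf_ex[OF A1] g1A x y by blast
        have "g2 s = z2" "g1 s = z1" using g1z g2z sB True by auto
        then show ?thesis using S_inf[OF A1 A2 mem[OF x] mem[OF y] is1 is2] by simp
      qed }
  qed
qed

definition encO :: "'a option \<Rightarrow> 'a + bool" where
  "encO u = (case u of None \<Rightarrow> Inr True | Some a \<Rightarrow> Inl a)"
definition decO :: "'a + bool \<Rightarrow> 'a option" where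
  "decO u = (case u of Inl a \<Rightarrow> Some a | Inr _ \<Rightarrow> None)"
lemma decO_encO[simp]: "decO (encO u) = u" by (cases u) (auto simp: encO_def decO_def)
definition enc2 :: "'a option \<times> 'a option \<Rightarrow> ('a + bool) list" where
  "enc2 p = [encO (fst p), encO (snd p)]"
definition dec2 :: "('a + bool) list \<Rightarrow> 'a option \<times> 'a option" where
  "dec2 u = (decO (u ! 0), decO (u ! 1))"
lemma dec2_enc2[simp]: "dec2 (enc2 p) = p" by (simp add: enc2_def dec2_def)

lemma ub_step:
  assumes po: "partial_order_on_set le L" and AL: "A \<subseteq> L" and s: "is_sup le L {x,y} s"
    and xL: "x \<in> L" and yL: "y \<in> L"
    and ux: "ux \<in> with_top A" and uy: "uy \<in> with_top A" and us: "us \<in> with_top A"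
    and x1: "le_top le (Some x) ux" and x2: "le_top le ux us"
    and y1: "le_top le (Some y) uy" and y2: "le_top le uy us"
  shows "le_top le (Some s) us"
proof (cases us)
  case None then show ?thesis by simp
next
  case (Some c)
  have AL2: "with_top A \<subseteq> with_top L" using with_top_mono[OF AL] .
  have sL: "s \<in> L" using s unfolding is_sup_def by auto
  have cL: "c \<in> L" using us Some AL by auto
  have uxL: "ux \<in> with_top L" "uy \<in> with_top L" "us \<in> with_top L" using ux uy us AL2 by blast+
  have "le_top le (Some x) us" using le_top_trans[OF po _ uxL(1) uxL(3) x1 x2] xL by simp
  moreover have "le_top le (Some y) us" using le_top_trans[OF po _ uxL(2) uxL(3) y1 y2] yL by simp
  ultimately have "le x c" "le y c" using Some by simp_all
  then have "le s c" using s cL unfolding is_sup_def by blast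
  then show ?thesis using Some by simp
qed

lemma lb_step:
  assumes L0: "is_lattice0 le L z" and AL: "A \<subseteq> L"
    and ci: "\<forall>x\<in>A. \<forall>y\<in>A. \<forall>s. is_inf le L {x,y} s \<longrightarrow> s \<in> A"
    and m: "is_inf le L {x,y} m" and xL: "x \<in> L" and yL: "y \<in> L" and u1: "u1 \<in> with_top A" and u2: "u2 \<in> with_top A"
    and x1: "le_top le (Some x) u1" and y1: "le_top le (Some y) u2"
  shows "\<exists>w\<in>with_top A. le_top le (Some m) w \<and> le_top le w u1 \<and> le_top le w u2"
proof -
  have po: "partial_order_on_set le L" using lat0_po[OF L0] .
  have mL: "m \<in> L" and mx: "le m x" "le m y" using m unfolding is_inf_def by auto
  show ?thesis
  proof (cases u1)
    case None
    show ?thesis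
    proof (cases u2)
      case None then show ?thesis using \<open>u1 = None\<close> by (intro bexI[of _ None]) auto
    next
      case (Some b)
      have bL: "b \<in> L" using u2 Some AL by auto
      have "le m b" using po_trans[OF po mL yL bL] mx y1 Some by simp
      then show ?thesis using Some \<open>u1 = None\<close> u2 po_refl[OF po bL] by (intro bexI[of _ "Some b"]) auto
    qed
  next
    case (Some a)
    have aA: "a \<in> A" and aL: "a \<in> L" using u1 Some AL by auto
    show ?thesis
    proof (cases u2)
      case None
      have "le m a" using po_trans[OF po mL xL aL] mx x1 Some by simp
      then show ?thesis using Some None u1 po_refl[OF po aL] by (intro bexI[of _ "Some a"]) auto
    next
      case (Some b)
      have bA: "b \<in> A" and bL: "b \<in> L" using u2 Some AL by auto
      obtain c where c: "is_inf le L {a,b} c" using lat0_inf_ex[OF L0 aL bL] by blast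
      have cA: "c \<in> A" using ci aA bA c by blast
      have "le m a" using po_trans[OF po mL xL aL] mx x1 \<open>u1 = Some a\<close> by simp
      moreover have "le m b" using po_trans[OF po mL yL bL] mx y1 Some by simp
      ultimately have "le m c" using c mL unfolding is_inf_def by blast
      moreover have "le c a" "le c b" using c unfolding is_inf_def by auto
      ultimately show ?thesis using Some \<open>u1 = Some a\<close> cA by (intro bexI[of _ "Some c"]) auto
    qed
  qed
qed

lemma below_z:
  assumes L0: "is_lattice0 le L z" and m: "m \<in> L" and mz: "le m z" and u: "u \<in> with_top L"
  shows "le_top le (Some m) u"
proof (cases u)
  case None then show ?thesis by simp
next
  case (Some c)
  then have cL: "c \<in> L" using u by simp
  have "le z c" using lat0_z(2)[OF L0 cL] .
  then have "le m c" using po_trans[OF lat0_po[OF L0] m lat0_z(1)[OF L0] cL] mz by simp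
  then show ?thesis using Some by simp
qed

lemma upper:
  assumes cp: "is_coproduct0 le L z I Ls" and i: "i \<in> I"
  shows "\<forall>x\<in>L. \<exists>y. is_least_above le (Ls i) x y"
proof -
  have L0: "is_lattice0 le L z" using cp unfolding is_coproduct0_def by blast
  have po: "partial_order_on_set le L" using lat0_po[OF L0] .
  have zL: "z \<in> L" using lat0_z(1)[OF L0] .
  have sub: "\<forall>j\<in>I. sublattice0 le L z (Ls j)" using cp unfolding is_coproduct0_def by blast
  note sci = sub0_closed[OF bspec[OF sub i]]
  have Li0: "is_lattice0 le (Ls i) z" using closed_lattice0[OF L0 sci] .
  have poi: "partial_order_on_set le (Ls i)" using lat0_po[OF Li0] .
  have A10: "is_lattice0 (le_top le) (with_top (Ls i)) (Some z)" using lat0_top[OF Li0] .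
  have A20: "is_lattice0 (le_top le) (with_top L) (Some z)" using lat0_top[OF L0] .
  let ?M = "smash (with_top (Ls i)) (Some z) (with_top L) (Some z)"
  let ?leM = "smash_le (le_top le) (le_top le)"
  have M0: "is_lattice0 ?leM ?M (Some z, Some z)" using smash_lat0[OF A10 A20] .
  define g1 where "g1 = (\<lambda>j a. if a = z then Some z else if j = i then Some a else None)"
  define fs where "fs = (\<lambda>j a. (g1 j a, Some a))"
  have g1i: "\<And>a. g1 i a = Some a" unfolding g1_def by simp
  have homs: "\<forall>j\<in>I. lattice_hom0 le (Ls j) z ?leM ?M (Some z, Some z) (fs j)"
  proof
    fix j assume j: "j \<in> I"
    note scj = sub0_closed[OF bspec[OF sub j]]
    have Bj0: "is_lattice0 le (Ls j) z" using closed_lattice0[OF L0 scj] .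
    have poj: "partial_order_on_set le (Ls j)" using lat0_po[OF Bj0] .
    have supL: "\<And>a b s. a \<in> Ls j \<Longrightarrow> b \<in> Ls j \<Longrightarrow> is_sup le (Ls j) {a,b} s \<Longrightarrow> is_sup le L {a,b} s"
      using closed_sup_iff[OF L0 scj(1) _ _ scj(3)] by blast
    have infL: "\<And>a b s. a \<in> Ls j \<Longrightarrow> b \<in> Ls j \<Longrightarrow> is_inf le (Ls j) {a,b} s \<Longrightarrow> is_inf le L {a,b} s"
      using closed_inf_iff[OF L0 scj(1) _ _ scj(4)] by blast
    have "lattice_hom0 le (Ls j) z ?leM ?M (Some z, Some z) (\<lambda>a. (g1 j a, Some a))"
    proof (rule smash_hom[OF Bj0 A10 A20])
      show "\<forall>a\<in>Ls j. g1 j a \<in> with_top (Ls i)" unfolding g1_def using sci(2) by auto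
      show "\<forall>a\<in>Ls j. Some a \<in> with_top L" using scj(1) by auto
      show "\<forall>a\<in>Ls j. (g1 j a = Some z) = (a = z)" unfolding g1_def by auto
      show "\<forall>a\<in>Ls j. (Some a = Some z) = (a = z)" by simp
      show "\<forall>a\<in>Ls j. \<forall>b\<in>Ls j. \<forall>s. is_sup le (Ls j) {a, b} s \<longrightarrow> is_sup (le_top le) (with_top L) {Some a, Some b} (Some s)"
        by (intro ballI allI impI W2 supL)
      show "\<forall>a\<in>Ls j. \<forall>b\<in>Ls j. \<forall>s. is_inf le (Ls j) {a, b} s \<longrightarrow> is_inf (le_top le) (with_top L) {Some a, Some b} (Some s)"
        by (intro ballI allI impI W3 infL)
      show "\<forall>a\<in>Ls j. \<forall>b\<in>Ls j. \<forall>s. is_sup le (Ls j) {a, b} s \<longrightarrow> is_sup (le_top le) (with_top (Ls i)) {g1 j a, g1 j b} (g1 j s)"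
      proof (intro ballI allI impI)
        fix a b s assume a: "a \<in> Ls j" and b: "b \<in> Ls j" and s: "is_sup le (Ls j) {a, b} s"
        show "is_sup (le_top le) (with_top (Ls i)) {g1 j a, g1 j b} (g1 j s)"
        proof (cases "j = i")
          case True then show ?thesis using W2[OF s] g1i by simp
        next
          case jni: False
          have sj: "s \<in> Ls j" using s unfolding is_sup_def by blast
          show ?thesis
          proof (cases "a = z \<and> b = z")
            case True
            have "le s z" using s True lat0_z(1)[OF Bj0] po_refl[OF poj lat0_z(1)[OF Bj0]] unfolding is_sup_def by auto
            then have "s = z" using le_z_eq[OF Bj0 sj] by blast
            moreover have "is_sup le (Ls i) {z, z} z" using sup_of_le[OF poi sci(2) sci(2) po_refl[OF poi sci(2)]] .
            then have "is_sup (le_top le) (with_top (Ls i)) {Some z, Some z} (Some z)" by (rule W2)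
            ultimately show ?thesis using True unfolding g1_def by simp
          next
            case nz: False
            have "s \<noteq> z"
            proof
              assume "s = z"
              then have "le a z" "le b z" using s unfolding is_sup_def by auto
              then show False using nz le_z_eq[OF Bj0] a b by blast
            qed
            then have "g1 j s = None" using jni unfolding g1_def by simp
            moreover have "None \<in> {g1 j a, g1 j b}" using nz jni unfolding g1_def by auto
            moreover have "{g1 j a, g1 j b} \<subseteq> with_top (Ls i)" unfolding g1_def using sci(2) jni by auto
            ultimately show ?thesis using W4 by metis
          qed
        qed
      qed
      show "\<forall>a\<in>Ls j. \<forall>b\<in>Ls j. \<forall>s. is_inf le (Ls j) {a, b} s \<longrightarrow> s \<noteq> z \<longrightarrow> is_inf (le_top le) (with_top (Ls i)) {g1 j a, g1 j b} (g1 j s)"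
      proof (intro ballI allI impI)
        fix a b s assume a: "a \<in> Ls j" and b: "b \<in> Ls j" and s: "is_inf le (Ls j) {a, b} s" and sz: "s \<noteq> z"
        show "is_inf (le_top le) (with_top (Ls i)) {g1 j a, g1 j b} (g1 j s)"
        proof (cases "j = i")
          case True then show ?thesis using W3[OF s] g1i by simp
        next
          case False
          have sj: "s \<in> Ls j" using s unfolding is_inf_def by blast
          have "a \<noteq> z"
          proof
            assume "a = z" then have "le s z" using s unfolding is_inf_def by auto
            then show False using sz le_z_eq[OF Bj0 sj] by blast
          qed
          moreover have "b \<noteq> z"
          proof
            assume "b = z" then have "le s z" using s unfolding is_inf_def by auto
            then show False using sz le_z_eq[OF Bj0 sj] by blast
          qed
          ultimately have "g1 j a = None" "g1 j b = None" "g1 j s = None" using False sz unfolding g1_def by auto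
          then show ?thesis using W5[OF poi, of None] by simp
        qed
      qed
    qed
    then show "lattice_hom0 le (Ls j) z ?leM ?M (Some z, Some z) (fs j)" unfolding fs_def by simp
  qed
  have inv2: "\<forall>x\<in>?M. dec2 (enc2 x) = x" by simp
  from univ[where e=enc2 and d=dec2 and fs=fs, OF cp M0 inv2 homs]
  obtain h where h: "lattice_hom0 le L z ?leM ?M (Some z, Some z) h" "\<forall>j\<in>I. \<forall>x\<in>Ls j. h x = fs j x" by blast
  have hM: "\<And>x. x \<in> L \<Longrightarrow> h x \<in> ?M" using hom_im[OF h(1)] .
  have hc: "\<And>x. x \<in> L \<Longrightarrow> fst (h x) \<in> with_top (Ls i) \<and> snd (h x) \<in> with_top L"
  proof -
    fix x assume x: "x \<in> L"
    have "(fst (h x), snd (h x)) \<in> ?M" using hM[OF x] by simp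
    then show "fst (h x) \<in> with_top (Ls i) \<and> snd (h x) \<in> with_top L"
      using smash_mem[of "fst (h x)" "snd (h x)"] lat0_z(1)[OF A10] lat0_z(1)[OF A20] by blast
  qed
  have AL2: "with_top (Ls i) \<subseteq> with_top L" using with_top_mono[OF sci(1)] .
  have mono: "\<And>x w. x \<in> L \<Longrightarrow> w \<in> L \<Longrightarrow> le x w \<Longrightarrow> le_top le (fst (h x)) (fst (h w)) \<and> le_top le (snd (h x)) (snd (h w))"
  proof -
    fix x w assume x: "x \<in> L" and w: "w \<in> L" and xw: "le x w"
    have "is_sup ?leM ?M {h x, h w} (h w)" using hom_sup[OF h(1) x w sup_of_le[OF po w x xw]] .
    then have "?leM (h x) (h w)" unfolding is_sup_def by blast
    then show "le_top le (fst (h x)) (fst (h w)) \<and> le_top le (snd (h x)) (snd (h w))" unfolding smash_le_def .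
  qed
  define T where "T = {x\<in>L. le_top le (Some x) (fst (h x)) \<and> le_top le (Some x) (snd (h x))}"
  have inT: "x \<in> T" if x: "x \<in> L" for x
  proof (rule coprod_induct[OF cp _ _ _ _ _ x])
    show "T \<subseteq> L" unfolding T_def by blast
    show "z \<in> T" unfolding T_def using hom_z[OF h(1)] zL po_refl[OF po zL] by simp
    show "\<forall>j\<in>I. Ls j \<subseteq> T"
    proof (intro ballI subsetI)
      fix j a assume j: "j \<in> I" and a: "a \<in> Ls j"
      have aL: "a \<in> L" using a sub0_closed(1)[OF bspec[OF sub j]] by blast
      have ha: "h a = (g1 j a, Some a)" using h(2) j a unfolding fs_def by simp
      have "le_top le (Some a) (g1 j a)" unfolding g1_def using po_refl[OF po aL] by auto
      then show "a \<in> T" unfolding T_def using ha aL po_refl[OF po aL] by simp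
    qed
    show "\<forall>x\<in>T. \<forall>y\<in>T. \<forall>s. is_sup le L {x,y} s \<longrightarrow> s \<in> T"
    proof (intro ballI allI impI)
      fix x y s assume x: "x \<in> T" and y: "y \<in> T" and s: "is_sup le L {x,y} s"
      have xL: "x \<in> L" and yL: "y \<in> L" using x y unfolding T_def by auto
      have sL: "s \<in> L" and xs: "le x s" and ys: "le y s" using s unfolding is_sup_def by auto
      note mx = mono[OF xL sL xs] and my = mono[OF yL sL ys]
      have "le_top le (Some s) (fst (h s))"
        using ub_step[OF po sci(1) s xL yL] hc[OF xL] hc[OF yL] hc[OF sL] mx my x y unfolding T_def by blast
      moreover have "le_top le (Some s) (snd (h s))"
        using ub_step[OF po subset_refl s xL yL] hc[OF xL] hc[OF yL] hc[OF sL] mx my x y unfolding T_def by blast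
      ultimately show "s \<in> T" unfolding T_def using sL by blast
    qed
    show "\<forall>x\<in>T. \<forall>y\<in>T. \<forall>s. is_inf le L {x,y} s \<longrightarrow> s \<in> T"
    proof (intro ballI allI impI)
      fix x y m assume x: "x \<in> T" and y: "y \<in> T" and m: "is_inf le L {x,y} m"
      have xL: "x \<in> L" and yL: "y \<in> L" using x y unfolding T_def by auto
      have mL: "m \<in> L" using m unfolding is_inf_def by auto
      have ciL: "\<forall>x\<in>L. \<forall>y\<in>L. \<forall>s. is_inf le L {x,y} s \<longrightarrow> s \<in> L" unfolding is_inf_def by blast
      obtain w1 where w1: "w1 \<in> with_top (Ls i)" "le_top le (Some m) w1" "le_top le w1 (fst (h x))" "le_top le w1 (fst (h y))"
        using lb_step[OF L0 sci(1) sci(4) m xL yL, of "fst (h x)" "fst (h y)"] hc[OF xL] hc[OF yL] x y unfolding T_def by blast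
      obtain w2 where w2: "w2 \<in> with_top L" "le_top le (Some m) w2" "le_top le w2 (snd (h x))" "le_top le w2 (snd (h y))"
        using lb_step[OF L0 subset_refl ciL m xL yL, of "snd (h x)" "snd (h y)"] hc[OF xL] hc[OF yL] x y unfolding T_def by blast
      have hm: "is_inf ?leM ?M {h x, h y} (h m)" using hom_inf[OF h(1) xL yL m] .
      have w1L: "w1 \<in> with_top L" using w1(1) AL2 by blast
      have mL': "Some m \<in> with_top L" using mL by simp
      have hmc: "fst (h m) \<in> with_top L" "snd (h m) \<in> with_top L" using hc[OF mL] AL2 by blast+
      show "m \<in> T"
      proof (cases "w1 \<noteq> Some z \<and> w2 \<noteq> Some z")
        case True
        then have wM: "(w1, w2) \<in> ?M" using smash_memI(1)[OF w1(1) w2(1)] by blast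
        have "\<forall>q\<in>{h x, h y}. ?leM (w1, w2) q" using w1 w2 unfolding smash_le_def by auto
        then have "?leM (w1, w2) (h m)" using hm wM unfolding is_inf_def by blast
        then have "le_top le w1 (fst (h m))" "le_top le w2 (snd (h m))" unfolding smash_le_def by auto
        then have "le_top le (Some m) (fst (h m))" "le_top le (Some m) (snd (h m))"
          using le_top_trans[OF po mL' w1L hmc(1) w1(2)] le_top_trans[OF po mL' w2(1) hmc(2) w2(2)] by blast+
        then show ?thesis unfolding T_def using mL by blast
      next
        case False
        then have "le_top le (Some m) (Some z)" using w1(2) w2(2) by auto
        then have "le m z" by simp
        then show ?thesis unfolding T_def using below_z[OF L0 mL _ hmc(1)] below_z[OF L0 mL _ hmc(2)] mL by blast
      qed
    qed
  qed
  show ?thesis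
  proof
    fix x assume x: "x \<in> L"
    have "is_least_above le (Ls i) x (fst (h x))"
      unfolding is_least_above_def
    proof (intro conjI ballI impI)
      show "fst (h x) \<in> with_top (Ls i)" using hc[OF x] by blast
      show "le_top le (Some x) (fst (h x))" using inT[OF x] unfolding T_def by blast
      fix w assume w: "w \<in> with_top (Ls i)" and xw: "le_top le (Some x) w"
      show "le_top le (fst (h x)) w"
      proof (cases w)
        case None then show ?thesis by simp
      next
        case (Some c)
        have c: "c \<in> Ls i" using w Some by simp
        have cL: "c \<in> L" using c sci(1) by blast
        have "h c = (Some c, Some c)" using h(2) i c g1i unfolding fs_def by simp
        then show ?thesis using mono[OF x cL] xw Some by simp
      qed
    qed
    then show "\<exists>y. is_least_above le (Ls i) x y" by blast
  qed
qed

lemma gb_unique: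
  assumes po: "partial_order_on_set le L" and AL: "A \<subseteq> L"
    and y1: "is_greatest_below le A x y1" and y2: "is_greatest_below le A x y2"
  shows "y1 = y2"
proof -
  have "y1 \<in> A" "y2 \<in> A" "le y1 y2" "le y2 y1" using y1 y2 unfolding is_greatest_below_def by blast+
  then show ?thesis using po_antisym[OF po] AL by blast
qed

lemma la_unique:
  assumes po: "partial_order_on_set le L" and AL: "A \<subseteq> L" and xL: "x \<in> L"
    and y1: "is_least_above le A x y1" and y2: "is_least_above le A x y2"
  shows "y1 = y2"
proof -
  have m: "y1 \<in> with_top A" "y2 \<in> with_top A" using y1 y2 unfolding is_least_above_def by blast+
  have "le_top le y1 y2" "le_top le y2 y1" using y1 y2 m unfolding is_least_above_def by blast+
  moreover have "y1 \<in> with_top L" "y2 \<in> with_top L" using m with_top_mono[OF AL] by blast+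
  ultimately show ?thesis using le_top_antisym[OF po] by blast
qed

theorem corollary4p3:
  fixes le :: "'a \<Rightarrow> 'a \<Rightarrow> bool" and L :: "'a set" and z :: 'a
    and I :: "'i set" and Ls :: "'i \<Rightarrow> 'a set"
  assumes coprod: "is_coproduct0 le L z I Ls"
    and disj: "\<forall>i\<in>I. \<forall>j\<in>I. i \<noteq> j \<longrightarrow> Ls i \<inter> Ls j = {z}"
    and i: "i \<in> I"
  shows "(\<forall>x\<in>L. \<exists>y. is_greatest_below le (Ls i) x y)
       \<and> (\<forall>x\<in>L. \<exists>y. is_least_above le (Ls i) x y)
       \<and> lower_bounded le (Ls i) le L id
       \<and> upper_bounded le (Ls i) le L id
       \<and> lattice_hom le (Ls i) le L id
       \<and> nonempty_complete le (Ls i) le L id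
       \<and> meet_complete le L le (Ls i) (lower_proj le (Ls i))
       \<and> nonempty_join_complete le L (le_top le) (with_top (Ls i)) (upper_proj le (Ls i))"
proof -
  have L0: "is_lattice0 le L z" using coprod unfolding is_coproduct0_def by blast
  have po: "partial_order_on_set le L" using lat0_po[OF L0] .
  have sub: "\<forall>j\<in>I. sublattice0 le L z (Ls j)" using coprod unfolding is_coproduct0_def by blast
  note sci = sub0_closed[OF bspec[OF sub i]]
  obtain al where al: "\<forall>x\<in>L. is_greatest_below le (Ls i) x (al x)" using retract[OF coprod i] by blast
  have up: "\<forall>x\<in>L. \<exists>y. is_least_above le (Ls i) x y" using upper[OF coprod i] .
  have lp: "\<And>x. x \<in> L \<Longrightarrow> lower_proj le (Ls i) x = al x"
    unfolding lower_proj_def using al gb_unique[OF po sci(1)] by blast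
  have lpg: "\<And>x. x \<in> L \<Longrightarrow> is_greatest_below le (Ls i) x (lower_proj le (Ls i) x)"
    using lp al by simp
  have upl: "\<And>x. x \<in> L \<Longrightarrow> is_least_above le (Ls i) x (upper_proj le (Ls i) x)"
  proof -
    fix x assume x: "x \<in> L"
    obtain y where y: "is_least_above le (Ls i) x y" using up x by blast
    have "upper_proj le (Ls i) x = y" unfolding upper_proj_def
      using y la_unique[OF po sci(1) x] by blast
    then show "is_least_above le (Ls i) x (upper_proj le (Ls i) x)" using y by simp
  qed
  have c3: "lower_bounded le (Ls i) le L id"
    unfolding lower_bounded_def
  proof
    fix y assume y: "y \<in> L"
    let ?b = "upper_proj le (Ls i) y"
    have b: "is_least_above le (Ls i) y ?b" using upl[OF y] .
    show "{x \<in> Ls i. le y (id x)} = {} \<or> (\<exists>m\<in>{x \<in> Ls i. le y (id x)}. \<forall>x\<in>{x \<in> Ls i. le y (id x)}. le m x)"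
    proof (cases ?b)
      case None
      have "{x \<in> Ls i. le y (id x)} = {}"
      proof (rule ccontr)
        assume "{x \<in> Ls i. le y (id x)} \<noteq> {}"
        then obtain x where "x \<in> Ls i" "le y x" by auto
        then have "le_top le ?b (Some x)" using b unfolding is_least_above_def by simp
        then show False using None by simp
      qed
      then show ?thesis by blast
    next
      case (Some m)
      have "m \<in> Ls i" "le y m" using b Some unfolding is_least_above_def by auto
      moreover have "\<forall>x\<in>{x \<in> Ls i. le y (id x)}. le m x"
      proof
        fix x assume "x \<in> {x \<in> Ls i. le y (id x)}"
        then have "x \<in> Ls i" "le y x" by auto
        then have "le_top le ?b (Some x)" using b unfolding is_least_above_def by simp
        then show "le m x" using Some by simp
      qed
      ultimately show ?thesis by auto
    qed
  qed
  have c4: "upper_bounded le (Ls i) le L id"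
    unfolding upper_bounded_def
  proof
    fix y assume y: "y \<in> L"
    have g: "is_greatest_below le (Ls i) y (al y)" using al y by blast
    then have "al y \<in> {x \<in> Ls i. le (id x) y}" unfolding is_greatest_below_def by simp
    moreover have "\<forall>x\<in>{x \<in> Ls i. le (id x) y}. le x (al y)" using g unfolding is_greatest_below_def by simp
    ultimately show "{x \<in> Ls i. le (id x) y} = {} \<or> (\<exists>m\<in>{x \<in> Ls i. le (id x) y}. \<forall>x\<in>{x \<in> Ls i. le (id x) y}. le x m)"
      by blast
  qed
  have c5: "lattice_hom le (Ls i) le L id"
    unfolding lattice_hom_def
  proof (intro conjI ballI allI impI)
    show "id ` Ls i \<subseteq> L" using sci(1) by simp
    fix x y s assume x: "x \<in> Ls i" and y: "y \<in> Ls i"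
    { assume "is_sup le (Ls i) {x, y} s"
      then show "is_sup le L {id x, id y} (id s)" using closed_sup_iff[OF L0 sci(1) x y sci(3)] by simp }
    { assume "is_inf le (Ls i) {x, y} s"
      then show "is_inf le L {id x, id y} (id s)" using closed_inf_iff[OF L0 sci(1) x y sci(4)] by simp }
  qed
  have c6a: "nonempty_meet_complete le (Ls i) le L id"
    unfolding nonempty_meet_complete_def
  proof (intro ballI allI impI)
    fix a X assume a: "a \<in> Ls i" and X: "X \<subseteq> Ls i \<and> X \<noteq> {} \<and> is_inf le (Ls i) X a"
    show "is_inf le L (id ` X) (id a)" unfolding is_inf_def
    proof (intro conjI ballI impI)
      show "id a \<in> L" using a sci(1) by auto
      fix x assume "x \<in> id ` X" then show "le (id a) x" using X unfolding is_inf_def by auto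
    next
      fix b assume b: "b \<in> L" and lb: "\<forall>x\<in>id ` X. le b x"
      let ?u = "upper_proj le (Ls i) b"
      have u: "is_least_above le (Ls i) b ?u" using upl[OF b] .
      obtain x0 where x0: "x0 \<in> X" using X by blast
      have "le_top le ?u (Some x0)" using u x0 X lb unfolding is_least_above_def by auto
      then obtain c where c: "?u = Some c" by (cases ?u) auto
      have cI: "c \<in> Ls i" and bc: "le b c" using u c unfolding is_least_above_def by auto
      have "\<forall>x\<in>X. le c x"
      proof
        fix x assume x: "x \<in> X"
        then have "le_top le ?u (Some x)" using u X lb unfolding is_least_above_def by auto
        then show "le c x" using c by simp
      qed
      then have "le c a" using X cI unfolding is_inf_def by blast
      then show "le b (id a)" using po_trans[OF po b _ _ bc] cI a sci(1) by auto
    qed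
  qed
  have c6b: "nonempty_join_complete le (Ls i) le L id"
    unfolding nonempty_join_complete_def
  proof (intro ballI allI impI)
    fix a X assume a: "a \<in> Ls i" and X: "X \<subseteq> Ls i \<and> X \<noteq> {} \<and> is_sup le (Ls i) X a"
    show "is_sup le L (id ` X) (id a)" unfolding is_sup_def
    proof (intro conjI ballI impI)
      show "id a \<in> L" using a sci(1) by auto
      fix x assume "x \<in> id ` X" then show "le x (id a)" using X unfolding is_sup_def by auto
    next
      fix b assume b: "b \<in> L" and ub: "\<forall>x\<in>id ` X. le x b"
      have g: "is_greatest_below le (Ls i) b (al b)" using al b by blast
      have "\<forall>x\<in>X. le x (al b)" using g X ub unfolding is_greatest_below_def by auto
      moreover have "al b \<in> Ls i" using g unfolding is_greatest_below_def by blast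
      ultimately have "le a (al b)" using X unfolding is_sup_def by blast
      moreover have "le (al b) b" using g unfolding is_greatest_below_def by blast
      ultimately show "le (id a) b" using po_trans[OF po _ _ b] a sci(1) \<open>al b \<in> Ls i\<close> by auto
    qed
  qed
  have c7: "meet_complete le L le (Ls i) (lower_proj le (Ls i))"
    unfolding meet_complete_def
  proof (intro ballI allI impI)
    fix a X assume a: "a \<in> L" and X: "X \<subseteq> L \<and> is_inf le L X a"
    have ga: "is_greatest_below le (Ls i) a (lower_proj le (Ls i) a)" using lpg[OF a] .
    let ?p = "lower_proj le (Ls i)"
    have paI: "?p a \<in> Ls i" and paa: "le (?p a) a" using ga unfolding is_greatest_below_def by blast+
    show "is_inf le (Ls i) (?p ` X) (?p a)" unfolding is_inf_def
    proof (intro conjI ballI impI)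
      show "?p a \<in> Ls i" by fact
      fix y assume "y \<in> ?p ` X"
      then obtain x where x: "x \<in> X" "y = ?p x" by blast
      have xL: "x \<in> L" using x X by blast
      have gx: "is_greatest_below le (Ls i) x (?p x)" using lpg[OF xL] .
      have "le a x" using X x unfolding is_inf_def by blast
      then have "le (?p a) x" using po_trans[OF po _ a xL paa] paI sci(1) by blast
      then show "le (?p a) y" using gx paI x unfolding is_greatest_below_def by blast
    next
      fix b assume b: "b \<in> Ls i" and lb: "\<forall>y\<in>?p ` X. le b y"
      have bL: "b \<in> L" using b sci(1) by blast
      have "\<forall>x\<in>X. le b x"
      proof
        fix x assume x: "x \<in> X"
        have xL: "x \<in> L" using x X by blast
        have gx: "is_greatest_below le (Ls i) x (?p x)" using lpg[OF xL] .
        have "?p x \<in> Ls i" "le (?p x) x" using gx unfolding is_greatest_below_def by blast+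
        moreover have "le b (?p x)" using lb x by blast
        ultimately show "le b x" using po_trans[OF po bL _ xL] sci(1) by blast
      qed
      then have "le b a" using X bL unfolding is_inf_def by blast
      then show "le b (?p a)" using ga b unfolding is_greatest_below_def by blast
    qed
  qed
  have c8: "nonempty_join_complete le L (le_top le) (with_top (Ls i)) (upper_proj le (Ls i))"
    unfolding nonempty_join_complete_def
  proof (intro ballI allI impI)
    fix a X assume a: "a \<in> L" and X: "X \<subseteq> L \<and> X \<noteq> {} \<and> is_sup le L X a"
    let ?p = "upper_proj le (Ls i)"
    have ua: "is_least_above le (Ls i) a (?p a)" using upl[OF a] .
    have paI: "?p a \<in> with_top (Ls i)" and apa: "le_top le (Some a) (?p a)" using ua unfolding is_least_above_def by blast+
    have W: "with_top (Ls i) \<subseteq> with_top L" using with_top_mono[OF sci(1)] .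
    show "is_sup (le_top le) (with_top (Ls i)) (?p ` X) (?p a)" unfolding is_sup_def
    proof (intro conjI ballI impI)
      show "?p a \<in> with_top (Ls i)" by fact
      fix y assume "y \<in> ?p ` X"
      then obtain x where x: "x \<in> X" "y = ?p x" by blast
      have xL: "x \<in> L" using x X by blast
      have ux: "is_least_above le (Ls i) x (?p x)" using upl[OF xL] .
      have "le x a" using X x unfolding is_sup_def by blast
      then have "le_top le (Some x) (?p a)"
        using le_top_trans[OF po _ _ _ _ apa, of "Some x"] a xL paI W by auto
      then show "le_top le y (?p a)" using ux paI x unfolding is_least_above_def by blast
    next
      fix b assume b: "b \<in> with_top (Ls i)" and ub: "\<forall>y\<in>?p ` X. le_top le y b"
      show "le_top le (?p a) b"
      proof (cases b)
        case None then show ?thesis by simp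
      next
        case (Some c)
        have cI: "c \<in> Ls i" using b Some by simp
        have cL: "c \<in> L" using cI sci(1) by blast
        have "\<forall>x\<in>X. le x c"
        proof
          fix x assume x: "x \<in> X"
          have xL: "x \<in> L" using x X by blast
          have ux: "is_least_above le (Ls i) x (?p x)" using upl[OF xL] .
          have pxI: "?p x \<in> with_top (Ls i)" and xpx: "le_top le (Some x) (?p x)" using ux unfolding is_least_above_def by blast+
          have "le_top le (?p x) b" using ub x by blast
          moreover have "Some x \<in> with_top L" "?p x \<in> with_top L" "b \<in> with_top L" using xL pxI b W by auto
          ultimately have "le_top le (Some x) b" using le_top_trans[OF po _ _ _ xpx] by blast
          then show "le x c" using Some by simp
        qed
        then have "le a c" using X cL unfolding is_sup_def by blast
        then show ?thesis using ua b Some unfolding is_least_above_def by simp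
      qed
    qed
  qed
  have "(\<forall>x\<in>L. \<exists>y. is_greatest_below le (Ls i) x y)" using al by blast
  then show ?thesis using up c3 c4 c5 c6a c6b c7 c8 unfolding nonempty_complete_def by blast
qed






end
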